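(* Let $f\in\mathcal A_C$, $n\in\mathbb N$, and let $g:\mathbb R\to\mathbb R$ be such that the pointwise derivatives $g^{(k)}$ exist at every point of $\mathbb R$ and $g^{(k)}\in AC(\overline{\mathbb R})$ for each $0\le k\le n$. Then $f*g\in C^n(\mathbb R)$ and $(f*g)^{(n)}(x)=f*g^{(n)}(x)$ for every $x\in\mathbb R$.
   Context: $AC(\overline{\mathbb R})$ denotes the functions on $\mathbb R$ that are absolutely continuous on each compact interval and of bounded variation on $\mathbb R$. $C^0(\overline{\mathbb R})$: continuous $F:\mathbb R\to\mathbb R$ with finite limits $F(\pm\infty)$; $\mathcal B_C=\{F\in C^0(\overline{\mathbb R}):F(-\infty)=0\}$; $\mathcal A_C=\{f\in\mathcal D'(\mathbb R): f=F'\text{ (distributional derivative) for some } F\in\mathcal B_C\}$, the primitive being unique. For $h\in\mathcal A_C$ with primitive $H$ and $g$ of bounded variation, $\int_{-\infty}^\infty hg=H(\infty)g(\infty)-\int_{-\infty}^\infty H\,dg$ (Henstock–Stieltjes). For $f\in\mathcal A_C$ with primitive $F$, $f(x-\cdot)$ is the element of $\mathcal A_C$ with primitive $y\mapsto F(\infty)-F(x-y)$, and for $g$ of bounded variation $f*g(x)=\int_{-\infty}^\infty f(x-y)g(y)\,dy$ is the product integral of $f(x-\cdot)$ and $g$. *)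

theory Defs
  imports "HOL-Analysis.Analysis"
begin

definition abs_cont_on :: "(real \<Rightarrow> real) \<Rightarrow> real \<Rightarrow> real \<Rightarrow> bool" where
  "abs_cont_on g a b \<longleftrightarrow>
     (\<forall>e>0. \<exists>d>0. \<forall>D S. D division_of S \<and> S \<subseteq> {a..b} \<and> (\<Sum>K\<in>D. Sup K - Inf K) < d
        \<longrightarrow> (\<Sum>K\<in>D. \<bar>g (Sup K) - g (Inf K)\<bar>) < e)"

definition bounded_variation_R :: "(real \<Rightarrow> real) \<Rightarrow> bool" where
  "bounded_variation_R g \<longleftrightarrow>
     (\<exists>M. \<forall>D S. D division_of S \<longrightarrow> (\<Sum>K\<in>D. \<bar>g (Sup K) - g (Inf K)\<bar>) \<le> M)"

definition AC_bar :: "(real \<Rightarrow> real) \<Rightarrow> bool" where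
  "AC_bar g \<longleftrightarrow> (\<forall>a b. abs_cont_on g a b) \<and> bounded_variation_R g"

(* B_C: continuous F with finite limits at +-infinity and F(-infinity) = 0.
   An element f of A_C is represented by its (unique) primitive F in B_C. *)
definition B_C :: "(real \<Rightarrow> real) \<Rightarrow> bool" where
  "B_C F \<longleftrightarrow> continuous_on UNIV F \<and> (F \<longlongrightarrow> 0) at_bot \<and> (\<exists>L. (F \<longlongrightarrow> L) at_top)"

definition lim_top :: "(real \<Rightarrow> real) \<Rightarrow> real" where
  "lim_top F = Lim at_top F"

definition hs_has_integral :: "(real \<Rightarrow> real) \<Rightarrow> (real \<Rightarrow> real) \<Rightarrow> real \<Rightarrow> real set \<Rightarrow> bool" where
  "hs_has_integral H g I S \<longleftrightarrow>
     (\<forall>e>0. \<exists>\<gamma>. gauge \<gamma> \<and>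
        (\<forall>p. p tagged_division_of S \<and> \<gamma> fine p \<longrightarrow>
           \<bar>(\<Sum>(t,K)\<in>p. H t * (g (Sup K) - g (Inf K))) - I\<bar> < e))"

definition hs_integral :: "(real \<Rightarrow> real) \<Rightarrow> (real \<Rightarrow> real) \<Rightarrow> real \<Rightarrow> real \<Rightarrow> real" where
  "hs_integral H g a b = (THE I. hs_has_integral H g I {a..b})"

(* Henstock-Stieltjes integral over the real line, as the limit over [a,b],
   a -> -infinity, b -> +infinity (Hake's theorem) *)
definition hs_integral_R :: "(real \<Rightarrow> real) \<Rightarrow> (real \<Rightarrow> real) \<Rightarrow> real" where
  "hs_integral_R H g = Lim (at_bot \<times>\<^sub>F at_top) (\<lambda>(a,b). hs_integral H g a b)"

(* f*g(x) for f in A_C with primitive F and g of bounded variation: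
   the product integral of f(x-.) (primitive y |-> F(inf) - F(x-y)) and g, i.e.
   H(inf) g(inf) - int H dg  with H(y) = F(inf) - F(x-y), H(inf) = F(inf). *)
definition conv :: "(real \<Rightarrow> real) \<Rightarrow> (real \<Rightarrow> real) \<Rightarrow> real \<Rightarrow> real" where
  "conv F g x = lim_top F * lim_top g - hs_integral_R (\<lambda>y. lim_top F - F (x - y)) g"

end

theory Submission
  imports Defs
begin

hide_const (open) Polynomial.content

definition Dg :: "(real \<Rightarrow> real) \<Rightarrow> real set \<Rightarrow> real" where
  "Dg g K = (if K = {} then 0 else g (Sup K) - g (Inf K))"

definition RS :: "(real \<Rightarrow> real) \<Rightarrow> (real \<Rightarrow> real) \<Rightarrow> (real \<times> real set) set \<Rightarrow> real" where
  "RS H g p = (\<Sum>(t,K)\<in>p. H t * Dg g K)"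

lemma Dg_interval: "u \<le> v \<Longrightarrow> Dg g {u..v} = g v - g u"
  by (simp add: Dg_def)

lemma Dg_degenerate:
  assumes "K = {u..v}" "interior K = {}"
  shows "Dg g K = 0"
proof (cases "u \<le> v")
  case True
  then have "v \<le> u" using assms by (metis interior_atLeastAtMost_real greaterThanLessThan_empty_iff)
  with True have "K = {u}" using assms by auto
  then show ?thesis by (simp add: Dg_def)
next
  case False then show ?thesis using assms by (simp add: Dg_def)
qed

lemma Dg_operative: "operative_real (+) 0 (Dg g)"
proof
  show "Dg g {a..b} = 0" if "b \<le> a" for a b
    using that by (cases "a = b") (auto simp: Dg_def)
  show "Dg g {a..c} + Dg g {c..b} = Dg g {a..b}" if "a < c" "c < b" for a b c
    using that by (simp add: Dg_def)
qed

lemma Dg_division: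
  assumes "d division_of {a..b}"
  shows "sum (Dg g) d = Dg g {a..b}"
proof -
  interpret operative_real "(+)" 0 "Dg g" by (rule Dg_operative)
  show ?thesis using division[of d a b] assms
    by (simp add: sum_def)
qed

lemma Dg_over_tagged:
  fixes p :: "(real \<times> real set) set" and d :: "real set \<Rightarrow> real"
  assumes "p tagged_division_of S" "\<And>u v. v \<le> u \<Longrightarrow> d {u..v} = 0"
  shows "(\<Sum>(t,K)\<in>p. d K) = sum d (snd ` p)"
  by (rule sum.over_tagged_division_lemma[OF assms(1)])
     (metis assms(2) box_real(1) box_real(2) greaterThanLessThan_empty_iff)

lemma tagged_interval:
  fixes p :: "(real \<times> real set) set"
  assumes "p tagged_division_of S" "(t,K) \<in> p"
  shows "\<exists>u v. K = {u..v} \<and> u \<le> t \<and> t \<le> v"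
proof -
  have "t \<in> K" using tagged_division_ofD(2)[OF assms(1) assms(2)] .
  moreover obtain u v where "K = cbox u v" using tagged_division_ofD(4)[OF assms(1) assms(2)] by blast
  ultimately show ?thesis by (auto simp: box_real(2))
qed

lemma RS_eq:
  assumes "p tagged_division_of S"
  shows "(\<Sum>(t,K)\<in>p. H t * (g (Sup K) - g (Inf K))) = RS H g p"
  unfolding RS_def
proof (rule sum.cong[OF refl])
  fix x assume "x \<in> p"
  then obtain t K where x: "x = (t,K)" "(t,K) \<in> p" by (cases x) auto
  then have "K \<noteq> {}" using tagged_division_ofD(2)[OF assms] by blast
  then show "(case x of (t, K) \<Rightarrow> H t * (g (Sup K) - g (Inf K))) = (case x of (t, K) \<Rightarrow> H t * Dg g K)"
    using x by (simp add: Dg_def)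
qed


lemma Dg_split:
  fixes p :: "(real \<times> real set) set"
  assumes p: "p tagged_division_of {a..b}" and K: "K = {u..v}" "K \<subseteq> {a..b}"
  shows "(\<Sum>(t,L)\<in>p. Dg g (K \<inter> L)) = Dg g K"
proof -
  have d: "snd ` p division_of {a..b}" by (rule division_of_tagged_division[OF p])
  have fin: "finite (snd ` p)" using d by (rule division_ofD(1))
  have "(\<Sum>(t,L)\<in>p. Dg g (K \<inter> L)) = (\<Sum>L\<in>snd ` p. Dg g (K \<inter> L))"
  proof (rule Dg_over_tagged[OF p])
    fix u' v' :: real assume "v' \<le> u'"
    then have "K \<inter> {u'..v'} = {max u u'..min v v'}" "min v v' \<le> max u u'" by (auto simp: K)
    then show "Dg g (K \<inter> {u'..v'}) = 0"
      by (intro Dg_degenerate[of _ "max u u'" "min v v'"]) auto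
  qed
  also have "\<dots> = (\<Sum>L\<in>{L\<in>snd ` p. K \<inter> L \<noteq> {}}. Dg g (K \<inter> L))"
    by (rule sum.mono_neutral_right) (use fin in \<open>auto simp: Dg_def\<close>)
  also have "\<dots> = sum (Dg g) ((\<lambda>L. K \<inter> L) ` {L\<in>snd ` p. K \<inter> L \<noteq> {}})"
  proof (rule sum.reindex_nontrivial[symmetric, unfolded o_def])
    show "finite {L \<in> snd ` p. K \<inter> L \<noteq> {}}" using fin by auto
    fix L1 L2 assume L: "L1 \<in> {L \<in> snd ` p. K \<inter> L \<noteq> {}}" "L2 \<in> {L \<in> snd ` p. K \<inter> L \<noteq> {}}"
      "L1 \<noteq> L2" "K \<inter> L1 = K \<inter> L2"
    have "interior L1 \<inter> interior L2 = {}" using division_ofD(5)[OF d] L(1,2,3) by blast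
    moreover have "interior (K \<inter> L1) \<subseteq> interior L1" "interior (K \<inter> L1) \<subseteq> interior L2"
      using L(4) by (metis inf.cobounded2 interior_mono)+
    ultimately have "interior (K \<inter> L1) = {}" by blast
    moreover obtain u1 v1 where "L1 = cbox u1 v1" using division_ofD(4)[OF d] L(1) by blast
    then have "K \<inter> L1 = {max u u1..min v v1}" by (auto simp: K)
    ultimately show "Dg g (K \<inter> L1) = 0" by (intro Dg_degenerate[of _ "max u u1" "min v v1"])
  qed
  also have "\<dots> = Dg g K"
  proof (cases "u \<le> v")
    case True
    have "{cbox u v \<inter> k | k. k \<in> snd ` p \<and> cbox u v \<inter> k \<noteq> {}} division_of (cbox u v)"
      by (rule division_inter_1[OF d]) (use K in simp)
    moreover have "{cbox u v \<inter> k | k. k \<in> snd ` p \<and> cbox u v \<inter> k \<noteq> {}} = (\<lambda>L. K \<inter> L) ` {L\<in>snd ` p. K \<inter> L \<noteq> {}}"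
      unfolding K box_real by blast
    ultimately show ?thesis using Dg_division K by (metis box_real(2))
  next
    case False
    then have "K = {}" using K by auto
    then show ?thesis by (simp add: Dg_def)
  qed
  finally show ?thesis .
qed


lemma Int_atLeastAtMost_real: "{a..b} \<inter> {c..d} = {max a c..min b (d::real)}"
  by auto

lemma Dg_split':
  fixes p :: "(real \<times> real set) set"
  assumes p: "p tagged_division_of {a..b}" and K: "K = {u..v}" "K \<subseteq> {a..b}"
  shows "(\<Sum>y\<in>p. Dg g (K \<inter> snd y)) = Dg g K"
  using Dg_split[OF assms] by (simp add: split_def)

lemma RS_snd: "RS H g p = (\<Sum>x\<in>p. H (fst x) * Dg g (snd x))"
  by (simp add: RS_def split_def)

lemma tagged_sub_interval:
  fixes p :: "(real \<times> real set) set"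
  assumes "p tagged_division_of {a..b}" "x \<in> p"
  shows "\<exists>u v. snd x = {u..v} \<and> snd x \<subseteq> {a..b} \<and> fst x \<in> snd x"
proof -
  obtain t K where x: "x = (t,K)" by (cases x)
  show ?thesis using tagged_interval[OF assms(1), of t K] tagged_division_ofD(2,3)[OF assms(1), of t K] assms(2) x
    by auto
qed

lemma pair_sum_bound:
  fixes p q :: "(real \<times> real set) set"
  assumes p: "p tagged_division_of {a..b}" and q: "q tagged_division_of {a..b}"
  and V: "\<And>D. D division_of {a..b} \<Longrightarrow> (\<Sum>X\<in>D. \<bar>Dg g X\<bar>) \<le> V"
  shows "(\<Sum>z\<in>p \<times> q. \<bar>Dg g (snd (fst z) \<inter> snd (snd z))\<bar>) \<le> V"
proof -
  define f where "f z = snd (fst z) \<inter> snd (snd z)" for z :: "(real \<times> real set) \<times> (real \<times> real set)"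
  define P' where "P' = {z \<in> p \<times> q. f z \<noteq> {}}"
  have finp: "finite p" and finq: "finite q" using p q by auto
  have "(\<Sum>z\<in>p \<times> q. \<bar>Dg g (f z)\<bar>) = (\<Sum>z\<in>P'. \<bar>Dg g (f z)\<bar>)"
    unfolding P'_def by (rule sum.mono_neutral_right) (use finp finq in \<open>auto simp: Dg_def\<close>)
  also have "\<dots> = (\<Sum>X\<in>f ` P'. \<bar>Dg g X\<bar>)"
  proof (rule sum.reindex_nontrivial[symmetric, unfolded o_def])
    show "finite P'" unfolding P'_def using finp finq by auto
    fix z1 z2 assume z: "z1 \<in> P'" "z2 \<in> P'" "z1 \<noteq> z2" "f z1 = f z2"
    have z1: "fst z1 \<in> p" "snd z1 \<in> q" and z2: "fst z2 \<in> p" "snd z2 \<in> q"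
      using z(1,2) unfolding P'_def by auto
    have "interior (f z1) = {}"
    proof (cases "fst z1 = fst z2")
      case False
      then have "interior (snd (fst z1)) \<inter> interior (snd (fst z2)) = {}"
        using tagged_division_ofD(5)[OF p, of "fst (fst z1)" "snd (fst z1)" "fst (fst z2)" "snd (fst z2)"] z1 z2
        by auto
      moreover have "interior (f z1) \<subseteq> interior (snd (fst z1))" "interior (f z1) \<subseteq> interior (snd (fst z2))"
        using z(4) unfolding f_def by (metis inf.cobounded1 interior_mono)+
      ultimately show ?thesis by blast
    next
      case True
      then have False': "snd z1 \<noteq> snd z2" using z(3) by (metis prod.expand)
      then have "interior (snd (snd z1)) \<inter> interior (snd (snd z2)) = {}"
        using tagged_division_ofD(5)[OF q, of "fst (snd z1)" "snd (snd z1)" "fst (snd z2)" "snd (snd z2)"] z1 z2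
        by auto
      moreover have "interior (f z1) \<subseteq> interior (snd (snd z1))" "interior (f z1) \<subseteq> interior (snd (snd z2))"
        using z(4) unfolding f_def by (metis inf.cobounded2 interior_mono)+
      ultimately show ?thesis by blast
    qed
    moreover obtain u1 v1 u2 v2 where "snd (fst z1) = {u1..v1}" "snd (snd z1) = {u2..v2}"
      using tagged_sub_interval[OF p z1(1)] tagged_sub_interval[OF q z1(2)] by blast
    then have "f z1 = {max u1 u2..min v1 v2}" unfolding f_def by auto
    ultimately show "\<bar>Dg g (f z1)\<bar> = 0" using Dg_degenerate by auto
  qed
  also have "\<dots> \<le> V"
  proof (rule V)
    have "{k1 \<inter> k2 | k1 k2. k1 \<in> snd ` p \<and> k2 \<in> snd ` q \<and> k1 \<inter> k2 \<noteq> {}} division_of ({a..b} \<inter> {a..b})"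
      by (rule division_inter[OF division_of_tagged_division[OF p] division_of_tagged_division[OF q]])
    moreover have "{k1 \<inter> k2 | k1 k2. k1 \<in> snd ` p \<and> k2 \<in> snd ` q \<and> k1 \<inter> k2 \<noteq> {}} = f ` P'"
    proof (rule set_eqI, rule iffI)
      fix X assume "X \<in> {k1 \<inter> k2 | k1 k2. k1 \<in> snd ` p \<and> k2 \<in> snd ` q \<and> k1 \<inter> k2 \<noteq> {}}"
      then obtain k1 k2 where X: "X = k1 \<inter> k2" "k1 \<in> snd ` p" "k2 \<in> snd ` q" "k1 \<inter> k2 \<noteq> {}" by blast
      then obtain x y where xy: "x \<in> p" "y \<in> q" "k1 = snd x" "k2 = snd y" by blast
      have "(x,y) \<in> P'" unfolding P'_def f_def using X xy by simp
      moreover have "X = f (x,y)" unfolding f_def using X xy by simp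
      ultimately show "X \<in> f ` P'" by blast
    next
      fix X assume "X \<in> f ` P'"
      then obtain z where z: "z \<in> P'" "X = f z" by blast
      then have "fst z \<in> p" "snd z \<in> q" "f z \<noteq> {}" unfolding P'_def by auto
      then show "X \<in> {k1 \<inter> k2 | k1 k2. k1 \<in> snd ` p \<and> k2 \<in> snd ` q \<and> k1 \<inter> k2 \<noteq> {}}"
        unfolding z(2) f_def by blast
    qed
    ultimately show "f ` P' division_of {a..b}" by simp
  qed
  finally show ?thesis unfolding f_def .
qed

lemma CT:
  fixes p q :: "(real \<times> real set) set"
  assumes p: "p tagged_division_of {a..b}" and q: "q tagged_division_of {a..b}"
  and H: "\<And>x y. x \<in> p \<Longrightarrow> y \<in> q \<Longrightarrow> snd x \<inter> snd y \<noteq> {} \<Longrightarrow> \<bar>H (fst x) - H (fst y)\<bar> \<le> e"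
  and V: "\<And>D. D division_of {a..b} \<Longrightarrow> (\<Sum>X\<in>D. \<bar>Dg g X\<bar>) \<le> V"
  and e: "e \<ge> 0"
  shows "\<bar>RS H g p - RS H g q\<bar> \<le> e * V"
proof -
  have P: "RS H g p = (\<Sum>x\<in>p. \<Sum>y\<in>q. H (fst x) * Dg g (snd x \<inter> snd y))"
    unfolding RS_snd
  proof (rule sum.cong[OF refl])
    fix x assume "x \<in> p"
    then obtain u v where uv: "snd x = {u..v}" "snd x \<subseteq> {a..b}" using tagged_sub_interval[OF p] by blast
    then show "H (fst x) * Dg g (snd x) = (\<Sum>y\<in>q. H (fst x) * Dg g (snd x \<inter> snd y))"
    proof -
      have "Dg g (snd x) = (\<Sum>w\<in>q. Dg g (snd x \<inter> snd w))"
        using Dg_split'[OF q, of "snd x" u v g] uv by simp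
      then show ?thesis by (simp add: sum_distrib_left)
    qed
  qed
  have Q: "RS H g q = (\<Sum>x\<in>p. \<Sum>y\<in>q. H (fst y) * Dg g (snd x \<inter> snd y))"
  proof -
    have "RS H g q = (\<Sum>y\<in>q. \<Sum>x\<in>p. H (fst y) * Dg g (snd y \<inter> snd x))"
      unfolding RS_snd
    proof (rule sum.cong[OF refl])
      fix y assume "y \<in> q"
      then obtain u v where uv: "snd y = {u..v}" "snd y \<subseteq> {a..b}" using tagged_sub_interval[OF q] by blast
      then show "H (fst y) * Dg g (snd y) = (\<Sum>x\<in>p. H (fst y) * Dg g (snd y \<inter> snd x))"
      proof -
      have "Dg g (snd y) = (\<Sum>w\<in>p. Dg g (snd y \<inter> snd w))"
        using Dg_split'[OF p, of "snd y" u v g] uv by simp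
      then show ?thesis by (simp add: sum_distrib_left)
    qed
    qed
    also have "\<dots> = (\<Sum>x\<in>p. \<Sum>y\<in>q. H (fst y) * Dg g (snd x \<inter> snd y))"
      by (subst sum.swap) (simp add: Int_commute)
    finally show ?thesis .
  qed
  have "\<bar>RS H g p - RS H g q\<bar> = \<bar>\<Sum>x\<in>p. \<Sum>y\<in>q. (H (fst x) - H (fst y)) * Dg g (snd x \<inter> snd y)\<bar>"
    unfolding P Q by (simp add: sum_subtractf[symmetric] left_diff_distrib)
  also have "\<dots> \<le> (\<Sum>x\<in>p. \<Sum>y\<in>q. e * \<bar>Dg g (snd x \<inter> snd y)\<bar>)"
  proof -
    have "\<bar>(H (fst x) - H (fst y)) * Dg g (snd x \<inter> snd y)\<bar> \<le> e * \<bar>Dg g (snd x \<inter> snd y)\<bar>"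
      if "x \<in> p" "y \<in> q" for x y
    proof (cases "snd x \<inter> snd y = {}")
      case True then show ?thesis by (simp add: Dg_def)
    next
      case False
      then show ?thesis using H[OF that False] by (simp add: abs_mult mult_right_mono)
    qed
    then show ?thesis
      by (intro order.trans[OF sum_abs] sum_mono order.trans[OF sum_abs]) auto
  qed
  also have "\<dots> = e * (\<Sum>z\<in>p \<times> q. \<bar>Dg g (snd (fst z) \<inter> snd (snd z))\<bar>)"
    by (simp add: sum_distrib_left sum.cartesian_product split_def)
  also have "\<dots> \<le> e * V"
    by (rule mult_left_mono[OF pair_sum_bound[OF p q V] e])
  finally show ?thesis .
qed


lemma CT_ball:
  fixes p q :: "(real \<times> real set) set"
  assumes p: "p tagged_division_of {a..b}" and q: "q tagged_division_of {a..b}"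
  and pf: "(\<lambda>x. ball x d1) fine p" and qf: "(\<lambda>x. ball x d2) fine q"
  and H: "\<And>s t. s \<in> {a..b} \<Longrightarrow> t \<in> {a..b} \<Longrightarrow> \<bar>s - t\<bar> < d1 + d2 \<Longrightarrow> \<bar>H s - H t\<bar> \<le> e"
  and V: "\<And>D. D division_of {a..b} \<Longrightarrow> (\<Sum>X\<in>D. \<bar>Dg g X\<bar>) \<le> V"
  and e: "e \<ge> 0"
  shows "\<bar>RS H g p - RS H g q\<bar> \<le> e * V"
proof (rule CT[OF p q _ V e])
  fix x y assume xy: "x \<in> p" "y \<in> q" "snd x \<inter> snd y \<noteq> {}"
  then obtain z where z: "z \<in> snd x" "z \<in> snd y" by blast
  have "snd x \<subseteq> ball (fst x) d1" using fineD[OF pf, of "fst x" "snd x"] xy(1) by simp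
  moreover have "snd y \<subseteq> ball (fst y) d2" using fineD[OF qf, of "fst y" "snd y"] xy(2) by simp
  ultimately have "dist (fst x) z < d1" "dist (fst y) z < d2" using z by (auto simp: subset_iff)
  then have "\<bar>fst x - fst y\<bar> < d1 + d2" by (simp add: dist_real_def)
  moreover have "fst x \<in> {a..b}" "fst y \<in> {a..b}"
    using tagged_sub_interval[OF p xy(1)] tagged_sub_interval[OF q xy(2)] by auto
  ultimately show "\<bar>H (fst x) - H (fst y)\<bar> \<le> e" using H by blast
qed

lemma RS_bound:
  fixes p :: "(real \<times> real set) set"
  assumes p: "p tagged_division_of {a..b}"
  and B: "\<And>t. t \<in> {a..b} \<Longrightarrow> \<bar>H t\<bar> \<le> B" "B \<ge> 0"
  and V: "(\<Sum>X\<in>snd ` p. \<bar>Dg g X\<bar>) \<le> V"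
  shows "\<bar>RS H g p\<bar> \<le> B * V"
proof -
  have "\<bar>RS H g p\<bar> \<le> (\<Sum>x\<in>p. B * \<bar>Dg g (snd x)\<bar>)"
    unfolding RS_snd
  proof (rule order.trans[OF sum_abs], rule sum_mono)
    fix x assume "x \<in> p"
    then have "fst x \<in> {a..b}" using tagged_sub_interval[OF p \<open>x \<in> p\<close>] by blast
    then show "\<bar>H (fst x) * Dg g (snd x)\<bar> \<le> B * \<bar>Dg g (snd x)\<bar>"
      using B by (simp add: abs_mult mult_right_mono)
  qed
  also have "\<dots> = B * (\<Sum>(t,K)\<in>p. \<bar>Dg g K\<bar>)" by (simp add: sum_distrib_left split_def)
  also have "(\<Sum>(t,K)\<in>p. \<bar>Dg g K\<bar>) = (\<Sum>X\<in>snd ` p. \<bar>Dg g X\<bar>)"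
    by (rule Dg_over_tagged[OF p]) (metis Dg_degenerate abs_zero interior_atLeastAtMost_real greaterThanLessThan_empty_iff)
  finally show ?thesis using V B(2) by (meson mult_left_mono order_trans)
qed

lemma hs_has_integral_RS:
  fixes p :: "(real \<times> real set) set"
  shows "hs_has_integral H g I S \<longleftrightarrow>
     (\<forall>e>0. \<exists>\<gamma>. gauge \<gamma> \<and> (\<forall>p. p tagged_division_of S \<and> \<gamma> fine p \<longrightarrow> \<bar>RS H g p - I\<bar> < e))"
  unfolding hs_has_integral_def using RS_eq by (metis (no_types, lifting))

lemma hs_unique:
  assumes "hs_has_integral H g I {a..b}" "hs_has_integral H g J {a..b}"
  shows "I = J"
proof (rule ccontr)
  assume ne: "I \<noteq> J"
  define e where "e = \<bar>I - J\<bar> / 2"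
  have e: "e > 0" using ne by (simp add: e_def)
  have "\<exists>\<gamma>. gauge \<gamma> \<and> (\<forall>p. p tagged_division_of {a..b} \<and> \<gamma> fine p \<longrightarrow> \<bar>RS H g p - I\<bar> < e)"
    using assms(1)[unfolded hs_has_integral_RS, rule_format, OF e] .
  then obtain \<gamma>1 where g1: "gauge \<gamma>1" "\<And>p. p tagged_division_of {a..b} \<Longrightarrow> \<gamma>1 fine p \<Longrightarrow> \<bar>RS H g p - I\<bar> < e"
    by auto
  have "\<exists>\<gamma>. gauge \<gamma> \<and> (\<forall>p. p tagged_division_of {a..b} \<and> \<gamma> fine p \<longrightarrow> \<bar>RS H g p - J\<bar> < e)"
    using assms(2)[unfolded hs_has_integral_RS, rule_format, OF e] .
  then obtain \<gamma>2 where g2: "gauge \<gamma>2" "\<And>p. p tagged_division_of {a..b} \<Longrightarrow> \<gamma>2 fine p \<Longrightarrow> \<bar>RS H g p - J\<bar> < e"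
    by auto
  obtain p where p: "p tagged_division_of {a..b}" "(\<lambda>x. \<gamma>1 x \<inter> \<gamma>2 x) fine p"
    by (rule fine_division_exists_real[OF gauge_Int[OF g1(1) g2(1)]])
  have f: "\<gamma>1 fine p" "\<gamma>2 fine p" using p(2) unfolding fine_Int by auto
  have "\<bar>RS H g p - I\<bar> < e" by (rule g1(2)[OF p(1) f(1)])
  moreover have "\<bar>RS H g p - J\<bar> < e" by (rule g2(2)[OF p(1) f(2)])
  ultimately have "\<bar>I - J\<bar> < 2 * e" by (smt (verit))
  then show False unfolding e_def by simp
qed

lemma hs_integral_eq:
  assumes "hs_has_integral H g I {a..b}"
  shows "hs_integral H g a b = I"
  unfolding hs_integral_def
  by (rule the_equality[of "\<lambda>I. hs_has_integral H g I {a..b}", OF assms]) (rule hs_unique[OF _ assms])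

lemma EX:
  assumes ab: "a \<le> b" and V0: "V \<ge> 0"
  and V: "\<And>D. D division_of {a..b} \<Longrightarrow> (\<Sum>X\<in>D. \<bar>Dg g X\<bar>) \<le> V"
  and UC: "\<And>e. e > 0 \<Longrightarrow> \<exists>d>0. \<forall>s\<in>{a..b}. \<forall>t\<in>{a..b}. \<bar>s - t\<bar> < d \<longrightarrow> \<bar>H s - H t\<bar> \<le> e"
  shows "hs_has_integral H g (hs_integral H g a b) {a..b} \<and>
     (\<forall>e d p. d > 0 \<longrightarrow> (\<forall>s\<in>{a..b}. \<forall>t\<in>{a..b}. \<bar>s - t\<bar> < 2*d \<longrightarrow> \<bar>H s - H t\<bar> \<le> e)
        \<longrightarrow> p tagged_division_of {a..b} \<longrightarrow> (\<lambda>x. ball x d) fine p \<longrightarrow> \<bar>RS H g p - hs_integral H g a b\<bar> \<le> e * V)"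
proof -
  obtain \<delta> where \<delta>: "\<And>n. \<delta> n > 0" "\<And>n s t. s \<in> {a..b} \<Longrightarrow> t \<in> {a..b} \<Longrightarrow> \<bar>s - t\<bar> < \<delta> n \<Longrightarrow> \<bar>H s - H t\<bar> \<le> 1 / (Suc n)"
  proof -
    have "\<forall>n. \<exists>d>0. \<forall>s\<in>{a..b}. \<forall>t\<in>{a..b}. \<bar>s - t\<bar> < d \<longrightarrow> \<bar>H s - H t\<bar> \<le> 1 / (Suc n)"
      using UC by simp
    then obtain \<delta> where "\<forall>n. \<delta> n > 0 \<and> (\<forall>s\<in>{a..b}. \<forall>t\<in>{a..b}. \<bar>s - t\<bar> < \<delta> n \<longrightarrow> \<bar>H s - H t\<bar> \<le> 1 / (Suc n))"
      by metis
    then show ?thesis using that by blast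
  qed
  define r where "r n = Min ((\<lambda>k. min (\<delta> k / 2) (1 / Suc k)) ` {..n})" for n
  have r0: "r n > 0" for n
    unfolding r_def using \<delta>(1) by (subst Min_gr_iff) auto
  have rle: "r n \<le> \<delta> k / 2" "r n \<le> 1 / Suc k" if "k \<le> n" for k n
    using that unfolding r_def by (meson Min_le atMost_iff finite_atMost finite_imageI image_eqI min.boundedE)+
  have "\<forall>n. \<exists>p. p tagged_division_of {a..b} \<and> (\<lambda>x. ball x (r n)) fine p"
    using fine_division_exists_real[OF gauge_ball[OF r0]] by metis
  then obtain P where P: "\<And>n. P n tagged_division_of {a..b}" "\<And>n. (\<lambda>x. ball x (r n)) fine P n"
    by metis
  have cauchy: "\<bar>RS H g (P m) - RS H g (P n)\<bar> \<le> V / Suc N" if "N \<le> m" "N \<le> n" for m n N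
  proof -
    have "\<bar>RS H g (P m) - RS H g (P n)\<bar> \<le> (1 / Suc N) * V"
    proof (rule CT_ball[OF P(1) P(1) P(2) P(2) _ V])
      fix s t assume st: "s \<in> {a..b}" "t \<in> {a..b}" "\<bar>s - t\<bar> < r m + r n"
      have "r m + r n \<le> \<delta> N" using rle(1)[OF that(1)] rle(1)[OF that(2)] by linarith
      then have "\<bar>s - t\<bar> < \<delta> N" using st(3) by linarith
      then show "\<bar>H s - H t\<bar> \<le> 1 / Suc N" using \<delta>(2)[OF st(1,2)] by blast
    qed auto
    then show ?thesis by simp
  qed
  have "Cauchy (\<lambda>n. RS H g (P n))"
  proof (rule metric_CauchyI)
    fix e :: real assume e: "e > 0"
    obtain N where N: "V / Suc N < e"
    proof -
      obtain N where "(V + 1) / e < real N" using reals_Archimedean2 by blast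
      then have "V + 1 < e * N" using e by (simp add: field_simps)
      then have "V / Suc N < e" using e V0 by (simp add: field_simps)
      then show ?thesis using that by blast
    qed
    show "\<exists>M. \<forall>m\<ge>M. \<forall>n\<ge>M. dist (RS H g (P m)) (RS H g (P n)) < e"
    proof (intro exI[of _ N] allI impI)
      fix m n assume "N \<le> m" "N \<le> n"
      then have "\<bar>RS H g (P m) - RS H g (P n)\<bar> \<le> V / Suc N" by (rule cauchy)
      then show "dist (RS H g (P m)) (RS H g (P n)) < e" using N by (simp add: dist_real_def)
    qed
  qed
  then have "convergent (\<lambda>n. RS H g (P n))" by (rule Cauchy_convergent)
  then obtain I where I: "(\<lambda>n. RS H g (P n)) \<longlonglongrightarrow> I"
    unfolding convergent_def by blast
  have err: "\<bar>RS H g p - I\<bar> \<le> e * V"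
    if d: "d > 0" and Hd: "\<forall>s\<in>{a..b}. \<forall>t\<in>{a..b}. \<bar>s - t\<bar> < 2*d \<longrightarrow> \<bar>H s - H t\<bar> \<le> e"
      and p: "p tagged_division_of {a..b}" "(\<lambda>x. ball x d) fine p" for e d p
  proof -
    have "a \<in> {a..b}" using ab by simp
    then have "\<bar>H a - H a\<bar> \<le> e" using Hd d by force
    then have e0: "e \<ge> 0" by simp
    obtain N where N: "1 / Suc N < d"
      using reals_Archimedean[OF d] by (auto simp: inverse_eq_divide)
    have ev: "eventually (\<lambda>n. \<bar>RS H g p - RS H g (P n)\<bar> \<le> e * V) sequentially"
    proof (rule eventually_sequentiallyI[of N])
      fix n assume n: "N \<le> n"
      have "r n \<le> 1 / Suc N" by (rule rle(2)[OF n])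
      then have rn: "r n < d" using N by linarith
      show "\<bar>RS H g p - RS H g (P n)\<bar> \<le> e * V"
      proof (rule CT_ball[OF p(1) P(1) p(2) P(2) _ V e0])
        fix s t assume "s \<in> {a..b}" "t \<in> {a..b}" "\<bar>s - t\<bar> < d + r n"
        then show "\<bar>H s - H t\<bar> \<le> e" using Hd rn by auto
      qed
    qed
    have "(\<lambda>n. \<bar>RS H g p - RS H g (P n)\<bar>) \<longlonglongrightarrow> \<bar>RS H g p - I\<bar>"
      by (intro tendsto_intros I)
    then show ?thesis using ev by (rule tendsto_upperbound) simp
  qed
  have hI: "hs_has_integral H g I {a..b}"
    unfolding hs_has_integral_RS
  proof (intro allI impI)
    fix e :: real assume e: "e > 0"
    define e' where "e' = e / (2 * (V + 1))"
    have e': "e' > 0" using e V0 by (simp add: e'_def)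
    obtain d0 where d0: "d0 > 0" "\<forall>s\<in>{a..b}. \<forall>t\<in>{a..b}. \<bar>s - t\<bar> < d0 \<longrightarrow> \<bar>H s - H t\<bar> \<le> e'"
      using UC[OF e'] by blast
    have "e' * V < e" using e V0 unfolding e'_def by (simp add: field_simps) (smt (verit) mult_nonneg_nonneg)
    moreover have "\<bar>RS H g p - I\<bar> \<le> e' * V" if "p tagged_division_of {a..b}" "(\<lambda>x. ball x (d0/2)) fine p" for p
      by (rule err[OF _ _ that]) (use d0 in auto)
    ultimately have "\<forall>p. p tagged_division_of {a..b} \<and> (\<lambda>x. ball x (d0/2)) fine p \<longrightarrow> \<bar>RS H g p - I\<bar> < e"
      by (meson le_less_trans)
    moreover have "gauge (\<lambda>x. ball x (d0/2))" using d0(1) by (simp add: gauge_ball)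
    ultimately show "\<exists>\<gamma>. gauge \<gamma> \<and> (\<forall>p. p tagged_division_of {a..b} \<and> \<gamma> fine p \<longrightarrow> \<bar>RS H g p - I\<bar> < e)"
      by blast
  qed
  have "hs_integral H g a b = I" by (rule hs_integral_eq[OF hI])
  then show ?thesis using hI err by auto
qed


lemma Dg_raw:
  assumes "D division_of S" "K \<in> D"
  shows "Dg g K = g (Sup K) - g (Inf K)"
  using division_ofD(3)[OF assms] by (simp add: Dg_def)

lemma division_sum_raw:
  assumes "D division_of S"
  shows "(\<Sum>K\<in>D. \<bar>g (Sup K) - g (Inf K)\<bar>) = (\<Sum>K\<in>D. \<bar>Dg g K\<bar>)"
  using Dg_raw[OF assms] by (intro sum.cong) auto

lemma AC_bar_BV:
  assumes "AC_bar g"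
  obtains M where "M \<ge> 0" "\<And>D S. D division_of S \<Longrightarrow> (\<Sum>K\<in>D. \<bar>Dg g K\<bar>) \<le> M"
proof -
  obtain M where M: "\<And>D S. D division_of S \<Longrightarrow> (\<Sum>K\<in>D. \<bar>g (Sup K) - g (Inf K)\<bar>) \<le> M"
    using assms unfolding AC_bar_def bounded_variation_R_def by blast
  have "M \<ge> 0" using M[of "{}" "{}"] by simp
  then show ?thesis using that M division_sum_raw by metis
qed

lemma AC_bar_cont:
  assumes "AC_bar g"
  shows "isCont g x"
proof -
  have ac: "abs_cont_on g (x - 1) (x + 1)" using assms unfolding AC_bar_def by blast
  show ?thesis
    unfolding isCont_def LIM_eq
  proof (intro allI impI)
    fix e :: real assume e: "e > 0"
    obtain d where d: "d > 0" "\<And>D S. D division_of S \<Longrightarrow> S \<subseteq> {x - 1..x + 1} \<Longrightarrow>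
        (\<Sum>K\<in>D. Sup K - Inf K) < d \<Longrightarrow> (\<Sum>K\<in>D. \<bar>g (Sup K) - g (Inf K)\<bar>) < e"
    proof -
      from ac[unfolded abs_cont_on_def, rule_format, OF e] obtain d where
        "d > 0" "\<forall>D S. D division_of S \<and> S \<subseteq> {x - 1..x + 1} \<and> (\<Sum>K\<in>D. Sup K - Inf K) < d
          \<longrightarrow> (\<Sum>K\<in>D. \<bar>g (Sup K) - g (Inf K)\<bar>) < e" by blast
      then show ?thesis using that by blast
    qed
    show "\<exists>s>0. \<forall>y. y \<noteq> x \<and> norm (y - x) < s \<longrightarrow> norm (g y - g x) < e"
    proof (intro exI[of _ "min d 1"] conjI allI impI)
      show "min d 1 > 0" using d(1) by simp
      fix y assume y: "y \<noteq> x \<and> norm (y - x) < min d 1"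
      define u where "u = min x y"
      define v where "v = max x y"
      have uv: "u \<le> v" unfolding u_def v_def by simp
      have D: "{{u..v}} division_of {u..v}" using division_of_self[of u v] uv by simp
      have "(\<Sum>K\<in>{{u..v}}. \<bar>g (Sup K) - g (Inf K)\<bar>) < e"
      proof (rule d(2)[OF D])
        show "{u..v} \<subseteq> {x - 1..x + 1}" using y unfolding u_def v_def by auto
        show "(\<Sum>K\<in>{{u..v}}. Sup K - Inf K) < d" using y uv unfolding u_def v_def by auto
      qed
      then have "\<bar>g v - g u\<bar> < e" using uv by simp
      then show "norm (g y - g x) < e" unfolding u_def v_def by (cases "x \<le> y") (auto simp: max_def min_def)
    qed
  qed
qed


lemma AC_bar_tail:
  assumes "AC_bar g" "e > 0"
  obtains A where "A > 0" "\<And>D S. D division_of S \<Longrightarrow> (\<forall>K\<in>D. K \<subseteq> {..-A} \<or> K \<subseteq> {A..}) \<Longrightarrow>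
      (\<Sum>K\<in>D. \<bar>Dg g K\<bar>) \<le> e"
proof -
  obtain M where M: "M \<ge> 0" "\<And>D S. D division_of S \<Longrightarrow> (\<Sum>K\<in>D. \<bar>Dg g K\<bar>) \<le> M"
    using AC_bar_BV[OF assms(1)] by blast
  define SS where "SS = {x. \<exists>D S. D division_of S \<and> x = (\<Sum>K\<in>D. \<bar>Dg g K\<bar>)}"
  have ne: "SS \<noteq> {}" unfolding SS_def using division_of_trivial by blast
  have bdd: "bdd_above SS" unfolding SS_def bdd_above_def using M(2) by blast
  have "Sup SS - e < Sup SS" using assms(2) by simp
  then obtain x where "x \<in> SS" "Sup SS - e < x" using less_cSup_iff[OF ne bdd] by blast
  then obtain D0 S0 where D0: "D0 division_of S0" "Sup SS - e < (\<Sum>K\<in>D0. \<bar>Dg g K\<bar>)"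
    unfolding SS_def by blast
  have "bounded S0"
  proof -
    have "S0 = \<Union>D0" using division_ofD(6)[OF D0(1)] by simp
    moreover have "bounded (\<Union>D0)"
      using division_ofD(1,4)[OF D0(1)] by (intro bounded_Union) (auto, metis bounded_closed_interval)
    ultimately show ?thesis by simp
  qed
  then obtain R where R: "\<And>x. x \<in> S0 \<Longrightarrow> \<bar>x\<bar> \<le> R" unfolding bounded_iff by auto
  define A where "A = \<bar>R\<bar> + 1"
  show ?thesis
  proof (rule that)
    show "A > 0" unfolding A_def by simp
    fix D S assume D: "D division_of S" and out: "\<forall>K\<in>D. K \<subseteq> {..-A} \<or> K \<subseteq> {A..}"
    have SU: "S = \<Union>D" using division_ofD(6)[OF D] by simp
    have disj: "S \<inter> S0 = {}"
    proof -
      have "\<bar>x\<bar> \<ge> A" if xS: "x \<in> S" for x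
      proof -
        obtain K where "K \<in> D" "x \<in> K" using xS SU by blast
        then show ?thesis using out by fastforce
      qed
      then show ?thesis using R unfolding A_def by fastforce
    qed
    then have "interior S \<inter> interior S0 = {}" using interior_subset by blast
    then have U: "(D \<union> D0) division_of (S \<union> S0)" by (rule division_disjoint_union[OF D D0(1)])
    have DD: "D \<inter> D0 = {}"
    proof (rule ccontr)
      assume "D \<inter> D0 \<noteq> {}"
      then obtain K where K: "K \<in> D" "K \<in> D0" by blast
      then have "K \<subseteq> S" "K \<subseteq> S0" "K \<noteq> {}" using division_ofD(2,3)[OF D] division_ofD(2)[OF D0(1)] by auto
      then show False using disj by blast
    qed
    have "(\<Sum>K\<in>D \<union> D0. \<bar>Dg g K\<bar>) = (\<Sum>K\<in>D. \<bar>Dg g K\<bar>) + (\<Sum>K\<in>D0. \<bar>Dg g K\<bar>)"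
      by (rule sum.union_disjoint[OF division_ofD(1)[OF D] division_ofD(1)[OF D0(1)] DD])
    moreover have "(\<Sum>K\<in>D \<union> D0. \<bar>Dg g K\<bar>) \<le> Sup SS"
      by (rule cSup_upper[OF _ bdd]) (use U in \<open>auto simp: SS_def\<close>)
    ultimately show "(\<Sum>K\<in>D. \<bar>Dg g K\<bar>) \<le> e" using D0(2) by linarith
  qed
qed

lemma cauchy_at_top_conv:
  fixes f :: "real \<Rightarrow> real"
  assumes C: "\<And>e. e > 0 \<Longrightarrow> \<exists>A. \<forall>x y. A \<le> x \<longrightarrow> A \<le> y \<longrightarrow> \<bar>f x - f y\<bar> \<le> e"
  shows "\<exists>L. (f \<longlongrightarrow> L) at_top"
proof -
  have "Cauchy (\<lambda>n. f (real n))"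
  proof (rule metric_CauchyI)
    fix e :: real assume e: "e > 0"
    obtain A where A: "\<forall>x y. A \<le> x \<longrightarrow> A \<le> y \<longrightarrow> \<bar>f x - f y\<bar> \<le> e/2" using C[of "e/2"] e by auto
    obtain N :: nat where N: "A \<le> real N" using real_arch_simple by blast
    show "\<exists>M. \<forall>m\<ge>M. \<forall>n\<ge>M. dist (f (real m)) (f (real n)) < e"
    proof (intro exI[of _ N] allI impI)
      fix m n assume "N \<le> m" "N \<le> n"
      then have "A \<le> real m" "A \<le> real n" using N by auto
      then have "\<bar>f (real m) - f (real n)\<bar> \<le> e/2" using A by blast
      then show "dist (f (real m)) (f (real n)) < e" using e by (simp add: dist_real_def)
    qed
  qed
  then have "convergent (\<lambda>n. f (real n))" by (rule Cauchy_convergent)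
  then obtain L where L: "(\<lambda>n. f (real n)) \<longlonglongrightarrow> L" unfolding convergent_def by blast
  have "(f \<longlongrightarrow> L) at_top"
  proof (rule tendstoI)
    fix e :: real assume e: "e > 0"
    obtain A where A: "\<forall>x y. A \<le> x \<longrightarrow> A \<le> y \<longrightarrow> \<bar>f x - f y\<bar> \<le> e/2" using C[of "e/2"] e by auto
    have xL: "\<bar>f x - L\<bar> \<le> e/2" if x: "A \<le> x" for x
    proof -
      obtain N :: nat where N: "A \<le> real N" using real_arch_simple by blast
      have ev: "eventually (\<lambda>n. \<bar>f x - f (real n)\<bar> \<le> e/2) sequentially"
      proof (rule eventually_sequentiallyI[of N])
        fix n assume "N \<le> n"
        then have "A \<le> real n" using N by auto
        then show "\<bar>f x - f (real n)\<bar> \<le> e/2" using A x by blast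
      qed
      have "(\<lambda>n. \<bar>f x - f (real n)\<bar>) \<longlonglongrightarrow> \<bar>f x - L\<bar>" by (intro tendsto_intros L)
      then show ?thesis using ev by (rule tendsto_upperbound) simp
    qed
    then show "eventually (\<lambda>x. dist (f x) L < e) at_top"
      unfolding eventually_at_top_linorder
    proof (intro exI[of _ A] allI impI)
      fix x assume "A \<le> x"
      then have "\<bar>f x - L\<bar> \<le> e/2" by (rule xL)
      then show "dist (f x) L < e" using e by (simp add: dist_real_def)
    qed
  qed
  then show ?thesis by blast
qed

lemma AC_bar_lim_top:
  assumes "AC_bar g"
  shows "\<exists>L. (g \<longlongrightarrow> L) at_top"
proof (rule cauchy_at_top_conv)
  fix e :: real assume e: "e > 0"
  obtain A where A: "A > 0" "\<And>D S. D division_of S \<Longrightarrow> (\<forall>K\<in>D. K \<subseteq> {..-A} \<or> K \<subseteq> {A..}) \<Longrightarrow>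
      (\<Sum>K\<in>D. \<bar>Dg g K\<bar>) \<le> e" using AC_bar_tail[OF assms e] by blast
  have "\<bar>g x - g y\<bar> \<le> e" if "A \<le> x" "A \<le> y" for x y
  proof -
    define u where "u = min x y"
    define v where "v = max x y"
    have uv: "u \<le> v" unfolding u_def v_def by simp
    have D: "{{u..v}} division_of {u..v}" using division_of_self[of u v] uv by simp
    have "(\<Sum>K\<in>{{u..v}}. \<bar>Dg g K\<bar>) \<le> e" by (rule A(2)[OF D]) (use that in \<open>auto simp: u_def\<close>)
    then have "\<bar>g v - g u\<bar> \<le> e" using uv by (simp add: Dg_def)
    then show ?thesis unfolding u_def v_def by (cases "x \<le> y") (auto simp: max_def min_def)
  qed
  then show "\<exists>A. \<forall>x y. A \<le> x \<longrightarrow> A \<le> y \<longrightarrow> \<bar>g x - g y\<bar> \<le> e" by blast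
qed

lemma AC_bar_lim_bot:
  assumes "AC_bar g"
  shows "\<exists>L. (g \<longlongrightarrow> L) at_bot"
proof -
  have "\<exists>L. ((\<lambda>x. g (- x)) \<longlongrightarrow> L) at_top"
  proof (rule cauchy_at_top_conv)
    fix e :: real assume e: "e > 0"
    obtain A where A: "A > 0" "\<And>D S. D division_of S \<Longrightarrow> (\<forall>K\<in>D. K \<subseteq> {..-A} \<or> K \<subseteq> {A..}) \<Longrightarrow>
        (\<Sum>K\<in>D. \<bar>Dg g K\<bar>) \<le> e" using AC_bar_tail[OF assms e] by blast
    have "\<bar>g (-x) - g (-y)\<bar> \<le> e" if "A \<le> x" "A \<le> y" for x y
    proof -
      define u where "u = min (-x) (-y)"
      define v where "v = max (-x) (-y)"
      have uv: "u \<le> v" unfolding u_def v_def by simp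
      have D: "{{u..v}} division_of {u..v}" using division_of_self[of u v] uv by simp
      have "(\<Sum>K\<in>{{u..v}}. \<bar>Dg g K\<bar>) \<le> e" by (rule A(2)[OF D]) (use that in \<open>auto simp: v_def\<close>)
      then have "\<bar>g v - g u\<bar> \<le> e" using uv by (simp add: Dg_def)
      then show ?thesis unfolding u_def v_def
        by (cases "x \<le> y") (simp_all add: max_absorb1 max_absorb2 min_absorb1 min_absorb2 abs_minus_commute)
    qed
    then show "\<exists>A. \<forall>x y. A \<le> x \<longrightarrow> A \<le> y \<longrightarrow> \<bar>g (-x) - g (-y)\<bar> \<le> e" by blast
  qed
  then show ?thesis unfolding filterlim_at_bot_mirror by simp
qed

lemma lim_top_eq: "(f \<longlongrightarrow> L) at_top \<Longrightarrow> lim_top f = L"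
  unfolding lim_top_def by (rule tendsto_Lim) simp

lemma BC_UC:
  assumes "B_C F" "e > 0"
  shows "\<exists>d>0. \<forall>x y. \<bar>x - y\<bar> < d \<longrightarrow> \<bar>F x - F y\<bar> \<le> e"
proof -
  obtain L where L: "(F \<longlongrightarrow> L) at_top" using assms(1) unfolding B_C_def by blast
  have L0: "(F \<longlongrightarrow> 0) at_bot" using assms(1) unfolding B_C_def by blast
  have cont: "continuous_on UNIV F" using assms(1) unfolding B_C_def by blast
  have "eventually (\<lambda>x. dist (F x) L < e/2) at_top" using L assms(2) by (intro tendstoD) auto
  then obtain A1 where A1: "\<And>x. x \<ge> A1 \<Longrightarrow> \<bar>F x - L\<bar> < e/2"
    unfolding eventually_at_top_linorder dist_real_def by blast
  have "eventually (\<lambda>x. dist (F x) 0 < e/2) at_bot" using L0 assms(2) by (intro tendstoD) auto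
  then obtain A2 where A2: "\<And>x. x \<le> A2 \<Longrightarrow> \<bar>F x\<bar> < e/2"
    unfolding eventually_at_bot_linorder dist_real_def by auto
  have "uniformly_continuous_on {A2 - 1..A1 + 1} F"
    by (rule compact_uniformly_continuous[OF continuous_on_subset[OF cont]]) auto
  then obtain d0 where d0: "d0 > 0" "\<And>x y. x \<in> {A2 - 1..A1 + 1} \<Longrightarrow> y \<in> {A2 - 1..A1 + 1} \<Longrightarrow>
      dist y x < d0 \<Longrightarrow> dist (F y) (F x) < e"
    unfolding uniformly_continuous_on_def using assms(2) by metis
  show ?thesis
  proof (intro exI[of _ "min d0 1"] conjI allI impI)
    show "min d0 1 > 0" using d0 by simp
    fix x y assume xy: "\<bar>x - y\<bar> < min d0 1"
    show "\<bar>F x - F y\<bar> \<le> e"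
    proof (cases "x \<in> {A2 - 1..A1 + 1} \<and> y \<in> {A2 - 1..A1 + 1}")
      case True
      then have "dist (F x) (F y) < e" using d0(2)[of y x] xy by (auto simp: dist_real_def)
      then show ?thesis by (simp add: dist_real_def)
    next
      case False
      then have "(x \<ge> A1 \<and> y \<ge> A1) \<or> (x \<le> A2 \<and> y \<le> A2)" using xy by auto
      then show ?thesis
      proof
        assume "x \<ge> A1 \<and> y \<ge> A1"
        then have "\<bar>F x - L\<bar> < e/2" "\<bar>F y - L\<bar> < e/2" using A1 by auto
        then show ?thesis by linarith
      next
        assume "x \<le> A2 \<and> y \<le> A2"
        then have "\<bar>F x\<bar> < e/2" "\<bar>F y\<bar> < e/2" using A2 by auto
        then show ?thesis by linarith
      qed
    qed
  qed
qed

lemma BC_bounded: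
  assumes "B_C F"
  obtains B where "B \<ge> 0" "\<And>x. \<bar>F x\<bar> \<le> B"
proof -
  obtain L where L: "(F \<longlongrightarrow> L) at_top" using assms(1) unfolding B_C_def by blast
  have L0: "(F \<longlongrightarrow> 0) at_bot" using assms(1) unfolding B_C_def by blast
  have cont: "continuous_on UNIV F" using assms(1) unfolding B_C_def by blast
  have "eventually (\<lambda>x. dist (F x) L < 1) at_top" using L by (intro tendstoD) auto
  then obtain A1 where A1: "\<And>x. x \<ge> A1 \<Longrightarrow> \<bar>F x - L\<bar> < 1"
    unfolding eventually_at_top_linorder dist_real_def by blast
  have "eventually (\<lambda>x. dist (F x) 0 < 1) at_bot" using L0 by (intro tendstoD) auto
  then obtain A2 where A2: "\<And>x. x \<le> A2 \<Longrightarrow> \<bar>F x\<bar> < 1"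
    unfolding eventually_at_bot_linorder dist_real_def by auto
  have "compact (F ` {A2..A1})"
    by (rule compact_continuous_image[OF continuous_on_subset[OF cont]]) auto
  then obtain R where R: "\<And>y. y \<in> F ` {A2..A1} \<Longrightarrow> \<bar>y\<bar> \<le> R"
  proof -
    have "bounded (F ` {A2..A1})" by (rule compact_imp_bounded) fact
    then obtain R where "\<forall>y\<in>F ` {A2..A1}. norm y \<le> R" unfolding bounded_iff by blast
    then show ?thesis using that by auto
  qed
  define B where "B = \<bar>R\<bar> + \<bar>L\<bar> + 1"
  show ?thesis
  proof (rule that)
    show "B \<ge> 0" unfolding B_def by simp
    fix x
    consider "x \<ge> A1" | "x \<le> A2" | "x \<in> {A2..A1}" by fastforce
    then show "\<bar>F x\<bar> \<le> B"
    proof cases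
      case 1 then show ?thesis using A1[of x] unfolding B_def by linarith
    next
      case 2 then show ?thesis using A2[of x] unfolding B_def by linarith
    next
      case 3 then show ?thesis using R[of "F x"] unfolding B_def by force
    qed
  qed
qed


definition tailp :: "(real \<Rightarrow> real) \<Rightarrow> real \<Rightarrow> real \<Rightarrow> bool" where
  "tailp g e A \<longleftrightarrow> A > 0 \<and> (\<forall>D S. D division_of S \<and> (\<forall>K\<in>D. K \<subseteq> {..-A} \<or> K \<subseteq> {A..})
      \<longrightarrow> (\<Sum>K\<in>D. \<bar>Dg g K\<bar>) \<le> e)"

definition UCR :: "(real \<Rightarrow> real) \<Rightarrow> bool" where
  "UCR H \<longleftrightarrow> (\<forall>e>0. \<exists>d>0. \<forall>s t. \<bar>s - t\<bar> < d \<longrightarrow> \<bar>H s - H t\<bar> \<le> e)"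

definition BVM :: "(real \<Rightarrow> real) \<Rightarrow> real \<Rightarrow> bool" where
  "BVM g M \<longleftrightarrow> M \<ge> 0 \<and> (\<forall>D S. D division_of S \<longrightarrow> (\<Sum>K\<in>D. \<bar>Dg g K\<bar>) \<le> M)"

lemma BVM_D: "BVM g M \<Longrightarrow> D division_of S \<Longrightarrow> (\<Sum>K\<in>D. \<bar>Dg g K\<bar>) \<le> M"
  unfolding BVM_def by blast

lemma BVM_nonneg: "BVM g M \<Longrightarrow> M \<ge> 0"
  unfolding BVM_def by blast

lemma AC_bar_BVM:
  assumes "AC_bar g"
  obtains M where "BVM g M"
proof -
  have "\<exists>M. BVM g M"
  proof (rule AC_bar_BV[OF assms])
    fix M assume "M \<ge> 0" "\<And>D S. D division_of S \<Longrightarrow> (\<Sum>K\<in>D. \<bar>Dg g K\<bar>) \<le> M"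
    then show "\<exists>M. BVM g M" unfolding BVM_def by blast
  qed
  then show ?thesis using that by blast
qed

lemma UCR_D:
  assumes "UCR H" "e > 0"
  obtains d where "d > 0" "\<And>s t. \<bar>s - t\<bar> < d \<Longrightarrow> \<bar>H s - H t\<bar> \<le> e"
proof -
  have "\<exists>d>0. \<forall>s t. \<bar>s - t\<bar> < d \<longrightarrow> \<bar>H s - H t\<bar> \<le> e"
    using assms(1)[unfolded UCR_def, rule_format, OF assms(2)] .
  then obtain d where d: "d > 0" "\<forall>s t. \<bar>s - t\<bar> < d \<longrightarrow> \<bar>H s - H t\<bar> \<le> e" by blast
  show ?thesis by (rule that[OF d(1)]) (use d(2) in blast)
qed

lemma AC_bar_tailp:
  assumes "AC_bar g" "e > 0"
  obtains A where "tailp g e A"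
  using AC_bar_tail[OF assms] unfolding tailp_def by metis

lemma approx:
  assumes M: "BVM g M"
    and U: "UCR H" and eta: "\<eta> > 0"
  obtains d where "d > 0" "\<And>a b p. a \<le> b \<Longrightarrow> p tagged_division_of {a..b} \<Longrightarrow> (\<lambda>x. ball x d) fine p \<Longrightarrow>
     \<bar>RS H g p - hs_integral H g a b\<bar> \<le> \<eta>"
proof -
  define e where "e = \<eta> / (M + 1)"
  have e: "e > 0" using eta BVM_nonneg[OF M] unfolding e_def by simp
  have eM: "e * M \<le> \<eta>" using eta BVM_nonneg[OF M] unfolding e_def by (simp add: field_simps)
  obtain \<delta> where \<delta>: "\<delta> > 0" "\<And>s t. \<bar>s - t\<bar> < \<delta> \<Longrightarrow> \<bar>H s - H t\<bar> \<le> e"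
    by (rule UCR_D[OF U e]) blast
  have UC: "\<exists>d>0. \<forall>s\<in>{a..b}. \<forall>t\<in>{a..b}. \<bar>s - t\<bar> < d \<longrightarrow> \<bar>H s - H t\<bar> \<le> e'" if e'0: "e' > 0" for e' a b
  proof -
    obtain d where "d > 0" "\<And>s t. \<bar>s - t\<bar> < d \<Longrightarrow> \<bar>H s - H t\<bar> \<le> e'"
      by (rule UCR_D[OF U e'0]) blast
    then show ?thesis by blast
  qed
  have EXab: "hs_has_integral H g (hs_integral H g a b) {a..b} \<and>
     (\<forall>e d p. d > 0 \<longrightarrow> (\<forall>s\<in>{a..b}. \<forall>t\<in>{a..b}. \<bar>s - t\<bar> < 2*d \<longrightarrow> \<bar>H s - H t\<bar> \<le> e)
        \<longrightarrow> p tagged_division_of {a..b} \<longrightarrow> (\<lambda>x. ball x d) fine p \<longrightarrow> \<bar>RS H g p - hs_integral H g a b\<bar> \<le> e * M)"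
    if ab: "a \<le> b" for a b
  proof (rule EX[OF ab BVM_nonneg[OF M]])
    show "\<And>D. D division_of {a..b} \<Longrightarrow> (\<Sum>X\<in>D. \<bar>Dg g X\<bar>) \<le> M" by (rule BVM_D[OF M])
    show "\<And>e. e > 0 \<Longrightarrow> \<exists>d>0. \<forall>s\<in>{a..b}. \<forall>t\<in>{a..b}. \<bar>s - t\<bar> < d \<longrightarrow> \<bar>H s - H t\<bar> \<le> e"
      by (rule UC)
  qed
  show ?thesis
  proof (rule that[of "\<delta>/2"])
    show "\<delta>/2 > 0" using \<delta> by simp
    fix a b :: real and p :: "(real \<times> real set) set"
    assume ab: "a \<le> b" and p: "p tagged_division_of {a..b}" "(\<lambda>x. ball x (\<delta>/2)) fine p"
    have "\<bar>RS H g p - hs_integral H g a b\<bar> \<le> e * M"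
    proof -
      have "\<forall>s\<in>{a..b}. \<forall>t\<in>{a..b}. \<bar>s - t\<bar> < 2*(\<delta>/2) \<longrightarrow> \<bar>H s - H t\<bar> \<le> e" using \<delta>(2) by simp
      then show ?thesis using conjunct2[OF EXab[OF ab]] \<delta>(1) p by (meson half_gt_zero)
    qed
    then show "\<bar>RS H g p - hs_integral H g a b\<bar> \<le> \<eta>" using eM by linarith
  qed
qed
lemma M_division:
  assumes M: "BVM g M"
    and p: "p tagged_division_of S"
  shows "(\<Sum>X\<in>snd ` p. \<bar>Dg g X\<bar>) \<le> M"
  by (rule BVM_D[OF M division_of_tagged_division[OF p]])

lemma J_bound:
  assumes M: "BVM g M"
    and U: "UCR H" and B: "\<And>t. \<bar>H t\<bar> \<le> B" and ab: "a \<le> b"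
  shows "\<bar>hs_integral H g a b\<bar> \<le> B * M"
proof (rule field_le_epsilon)
  fix \<eta> :: real assume eta: "\<eta> > 0"
  obtain d where d: "d > 0" "\<And>a b p. a \<le> b \<Longrightarrow> p tagged_division_of {a..b} \<Longrightarrow> (\<lambda>x. ball x d) fine p \<Longrightarrow>
     \<bar>RS H g p - hs_integral H g a b\<bar> \<le> \<eta>" by (rule approx[OF M U eta]) blast
  obtain p where p: "p tagged_division_of {a..b}" "(\<lambda>x. ball x d) fine p"
    by (rule fine_division_exists_real[OF gauge_ball[OF d(1)]])
  have B0: "B \<ge> 0" using B[of 0] by simp
  have "\<bar>RS H g p\<bar> \<le> B * M" by (rule RS_bound[OF p(1) B B0 M_division[OF M p(1)]])
  moreover have "\<bar>RS H g p - hs_integral H g a b\<bar> \<le> \<eta>" by (rule d(2)[OF ab p])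
  ultimately show "\<bar>hs_integral H g a b\<bar> \<le> B * M + \<eta>" by linarith
qed

lemma RS_Un:
  fixes p1 p2 :: "(real \<times> real set) set"
  assumes p1: "p1 tagged_division_of {a1..c}" and p2: "p2 tagged_division_of {c..b2}"
  shows "RS H g (p1 \<union> p2) = RS H g p1 + RS H g p2"
proof -
  have "RS H g (p1 \<inter> p2) = 0"
    unfolding RS_snd
  proof (rule sum.neutral, rule ballI)
    fix x assume x: "x \<in> p1 \<inter> p2"
    have "snd x \<subseteq> {a1..c}" "snd x \<subseteq> {c..b2}" "fst x \<in> snd x"
      using tagged_sub_interval[OF p1, of x] tagged_sub_interval[OF p2, of x] x by auto
    then have sub: "snd x \<subseteq> {a1..c}" "snd x \<subseteq> {c..b2}" and ne: "fst x \<in> snd x" by auto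
    have "snd x \<subseteq> {c}"
    proof
      fix y assume "y \<in> snd x"
      then have "y \<in> {a1..c}" "y \<in> {c..b2}" using sub by blast+
      then show "y \<in> {c}" by simp
    qed
    then have "snd x = {c}" using ne by blast
    then show "H (fst x) * Dg g (snd x) = 0" by (simp add: Dg_def)
  qed
  moreover have "RS H g (p1 \<union> p2) + RS H g (p1 \<inter> p2) = RS H g p1 + RS H g p2"
    unfolding RS_snd by (rule sum.union_inter) (use p1 p2 in auto)
  ultimately show ?thesis by simp
qed

lemma RS_tail:
  fixes p :: "(real \<times> real set) set"
  assumes T: "tailp g e A" and p: "p tagged_division_of {u..v}"
    and out: "{u..v} \<subseteq> {..-A} \<or> {u..v} \<subseteq> {A..}"
    and B: "\<And>t. \<bar>H t\<bar> \<le> B"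
  shows "\<bar>RS H g p\<bar> \<le> B * e"
proof (rule RS_bound[OF p])
  show "\<And>t. \<bar>H t\<bar> \<le> B" by (rule B)
  show "B \<ge> 0" using B[of 0] by simp
  have d: "snd ` p division_of {u..v}" by (rule division_of_tagged_division[OF p])
  have "\<forall>K\<in>snd ` p. K \<subseteq> {..-A} \<or> K \<subseteq> {A..}"
    using division_ofD(2)[OF d] out by blast
  then show "(\<Sum>X\<in>snd ` p. \<bar>Dg g X\<bar>) \<le> e" using T d unfolding tailp_def by blast
qed

lemma J_ext:
  assumes M: "BVM g M"
    and U: "UCR H" and B: "\<And>t. \<bar>H t\<bar> \<le> B" and T: "tailp g e A"
  shows "a' \<le> a \<Longrightarrow> a \<le> b \<Longrightarrow> a \<le> -A \<Longrightarrow> \<bar>hs_integral H g a' b - hs_integral H g a b\<bar> \<le> B * e"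
    and "b \<le> b' \<Longrightarrow> a \<le> b \<Longrightarrow> A \<le> b \<Longrightarrow> \<bar>hs_integral H g a b' - hs_integral H g a b\<bar> \<le> B * e"
proof -
  assume aa: "a' \<le> a" and ab: "a \<le> b" and aA: "a \<le> -A"
  show "\<bar>hs_integral H g a' b - hs_integral H g a b\<bar> \<le> B * e"
  proof (rule field_le_epsilon)
    fix \<eta> :: real assume eta: "\<eta> > 0"
    obtain d where d: "d > 0" "\<And>a b p. a \<le> b \<Longrightarrow> p tagged_division_of {a..b} \<Longrightarrow> (\<lambda>x. ball x d) fine p \<Longrightarrow>
       \<bar>RS H g p - hs_integral H g a b\<bar> \<le> \<eta>/2" by (rule approx[OF M U half_gt_zero[OF eta]]) blast
    obtain p1 where p1: "p1 tagged_division_of {a'..a}" "(\<lambda>x. ball x d) fine p1"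
      by (rule fine_division_exists_real[OF gauge_ball[OF d(1)]])
    obtain p2 where p2: "p2 tagged_division_of {a..b}" "(\<lambda>x. ball x d) fine p2"
      by (rule fine_division_exists_real[OF gauge_ball[OF d(1)]])
    have "(p1 \<union> p2) tagged_division_of ({a'..a} \<union> {a..b})"
      by (rule tagged_division_Un[OF p1(1) p2(1)]) auto
    moreover have "{a'..a} \<union> {a..b} = {a'..b}" using aa ab by auto
    ultimately have p: "(p1 \<union> p2) tagged_division_of {a'..b}" by simp
    have pf: "(\<lambda>x. ball x d) fine (p1 \<union> p2)" by (rule fine_Un[OF p1(2) p2(2)])
    have "\<bar>RS H g (p1 \<union> p2) - hs_integral H g a' b\<bar> \<le> \<eta>/2" using d(2)[OF _ p pf] aa ab by simp
    moreover have "\<bar>RS H g p2 - hs_integral H g a b\<bar> \<le> \<eta>/2" by (rule d(2)[OF ab p2])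
    moreover have "\<bar>RS H g p1\<bar> \<le> B * e" by (rule RS_tail[OF T p1(1) _ B]) (use aA in auto)
    moreover have "RS H g (p1 \<union> p2) = RS H g p1 + RS H g p2" by (rule RS_Un[OF p1(1) p2(1)])
    ultimately show "\<bar>hs_integral H g a' b - hs_integral H g a b\<bar> \<le> B * e + \<eta>" by linarith
  qed
next
  assume bb: "b \<le> b'" and ab: "a \<le> b" and bA: "A \<le> b"
  show "\<bar>hs_integral H g a b' - hs_integral H g a b\<bar> \<le> B * e"
  proof (rule field_le_epsilon)
    fix \<eta> :: real assume eta: "\<eta> > 0"
    obtain d where d: "d > 0" "\<And>a b p. a \<le> b \<Longrightarrow> p tagged_division_of {a..b} \<Longrightarrow> (\<lambda>x. ball x d) fine p \<Longrightarrow>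
       \<bar>RS H g p - hs_integral H g a b\<bar> \<le> \<eta>/2" by (rule approx[OF M U half_gt_zero[OF eta]]) blast
    obtain p1 where p1: "p1 tagged_division_of {a..b}" "(\<lambda>x. ball x d) fine p1"
      by (rule fine_division_exists_real[OF gauge_ball[OF d(1)]])
    obtain p2 where p2: "p2 tagged_division_of {b..b'}" "(\<lambda>x. ball x d) fine p2"
      by (rule fine_division_exists_real[OF gauge_ball[OF d(1)]])
    have "(p1 \<union> p2) tagged_division_of ({a..b} \<union> {b..b'})"
      by (rule tagged_division_Un[OF p1(1) p2(1)]) auto
    moreover have "{a..b} \<union> {b..b'} = {a..b'}" using bb ab by auto
    ultimately have p: "(p1 \<union> p2) tagged_division_of {a..b'}" by simp
    have pf: "(\<lambda>x. ball x d) fine (p1 \<union> p2)" by (rule fine_Un[OF p1(2) p2(2)])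
    have "\<bar>RS H g (p1 \<union> p2) - hs_integral H g a b'\<bar> \<le> \<eta>/2" using d(2)[OF _ p pf] bb ab by simp
    moreover have "\<bar>RS H g p1 - hs_integral H g a b\<bar> \<le> \<eta>/2" by (rule d(2)[OF ab p1])
    moreover have "\<bar>RS H g p2\<bar> \<le> B * e" by (rule RS_tail[OF T p2(1) _ B]) (use bA in auto)
    moreover have "RS H g (p1 \<union> p2) = RS H g p1 + RS H g p2" by (rule RS_Un[OF p1(1) p2(1)])
    ultimately show "\<bar>hs_integral H g a b' - hs_integral H g a b\<bar> \<le> B * e + \<eta>" by linarith
  qed
qed

lemma J_cauchy:
  assumes M: "BVM g M"
    and U: "UCR H" and B: "\<And>t. \<bar>H t\<bar> \<le> B" and T: "tailp g e A"
    and a: "a1 \<le> -A" "a2 \<le> -A" and b: "A \<le> b1" "A \<le> b2"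
  shows "\<bar>hs_integral H g a1 b1 - hs_integral H g a2 b2\<bar> \<le> 4 * (B * e)"
proof -
  have A: "A > 0" using T unfolding tailp_def by simp
  define a0 where "a0 = min a1 a2"
  define b0 where "b0 = max b1 b2"
  note E = J_ext[OF M U B T]
  have "\<bar>hs_integral H g a0 b1 - hs_integral H g a1 b1\<bar> \<le> B * e"
    by (rule E(1)) (use a b A in \<open>auto simp: a0_def\<close>)
  moreover have "\<bar>hs_integral H g a0 b1 - hs_integral H g a2 b1\<bar> \<le> B * e"
    by (rule E(1)) (use a b A in \<open>auto simp: a0_def\<close>)
  moreover have "\<bar>hs_integral H g a2 b0 - hs_integral H g a2 b1\<bar> \<le> B * e"
    by (rule E(2)) (use a b A in \<open>auto simp: b0_def\<close>)
  moreover have "\<bar>hs_integral H g a2 b0 - hs_integral H g a2 b2\<bar> \<le> B * e"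
    by (rule E(2)) (use a b A in \<open>auto simp: b0_def\<close>)
  ultimately show ?thesis by linarith
qed


lemma JR:
  assumes g: "AC_bar g" and M: "BVM g M"
    and U: "UCR H" and B: "\<And>t. \<bar>H t\<bar> \<le> B"
  shows "((\<lambda>(a,b). hs_integral H g a b) \<longlongrightarrow> hs_integral_R H g) (at_bot \<times>\<^sub>F at_top)"
    and "\<And>e A a b. tailp g e A \<Longrightarrow> a \<le> -A \<Longrightarrow> A \<le> b \<Longrightarrow>
           \<bar>hs_integral H g a b - hs_integral_R H g\<bar> \<le> 4 * (B * e)"
proof -
  have B0: "B \<ge> 0" using B[of 0] by simp
  define s where "s n = hs_integral H g (- real n) (real n)" for n
  have "Cauchy s"
  proof (rule metric_CauchyI)
    fix \<eta> :: real assume eta: "\<eta> > 0"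
    define e where "e = \<eta> / (4 * B + 1) / 2"
    have e: "e > 0" using eta B0 unfolding e_def by simp
    have eB: "4 * (B * e) < \<eta>" using eta B0 unfolding e_def
      by (simp add: field_simps) (intro add_pos_nonneg mult_nonneg_nonneg; simp)
    obtain A where T: "tailp g e A" by (rule AC_bar_tailp[OF g e])
    obtain N :: nat where N: "A \<le> real N" using real_arch_simple by blast
    show "\<exists>N. \<forall>m\<ge>N. \<forall>n\<ge>N. dist (s m) (s n) < \<eta>"
    proof (intro exI[of _ N] allI impI)
      fix m n assume "N \<le> m" "N \<le> n"
      then have "A \<le> real m" "A \<le> real n" using N by auto
      then have "\<bar>s m - s n\<bar> \<le> 4 * (B * e)" unfolding s_def by (intro J_cauchy[OF M U B T]) auto
      then show "dist (s m) (s n) < \<eta>" using eB by (simp add: dist_real_def)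
    qed
  qed
  then have "convergent s" by (rule Cauchy_convergent)
  then obtain L where L: "s \<longlonglongrightarrow> L" unfolding convergent_def by blast
  have est: "\<bar>hs_integral H g a b - L\<bar> \<le> 4 * (B * e)" if T: "tailp g e A" and ab: "a \<le> -A" "A \<le> b" for e A a b
  proof -
    obtain N :: nat where N: "A \<le> real N" using real_arch_simple by blast
    have ev: "eventually (\<lambda>n. \<bar>hs_integral H g a b - s n\<bar> \<le> 4 * (B * e)) sequentially"
    proof (rule eventually_sequentiallyI[of N])
      fix n assume "N \<le> n"
      then have "A \<le> real n" using N by auto
      then show "\<bar>hs_integral H g a b - s n\<bar> \<le> 4 * (B * e)" unfolding s_def using ab
        by (intro J_cauchy[OF M U B T]) auto
    qed
    have "(\<lambda>n. \<bar>hs_integral H g a b - s n\<bar>) \<longlonglongrightarrow> \<bar>hs_integral H g a b - L\<bar>" by (intro tendsto_intros L)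
    then show ?thesis using ev by (rule tendsto_upperbound) simp
  qed
  have lim: "((\<lambda>(a,b). hs_integral H g a b) \<longlongrightarrow> L) (at_bot \<times>\<^sub>F at_top)"
  proof (rule tendstoI)
    fix \<eta> :: real assume eta: "\<eta> > 0"
    define e where "e = \<eta> / (4 * B + 1) / 2"
    have e: "e > 0" using eta B0 unfolding e_def by simp
    have eB: "4 * (B * e) < \<eta>" using eta B0 unfolding e_def
      by (simp add: field_simps) (intro add_pos_nonneg mult_nonneg_nonneg; simp)
    obtain A where T: "tailp g e A" by (rule AC_bar_tailp[OF g e])
    show "eventually (\<lambda>x. dist ((\<lambda>(a,b). hs_integral H g a b) x) L < \<eta>) (at_bot \<times>\<^sub>F at_top)"
      unfolding eventually_prod_filter
    proof (intro exI conjI allI impI)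
      show "eventually (\<lambda>a. a \<le> -A) at_bot" by (rule eventually_le_at_bot)
      show "eventually (\<lambda>b. A \<le> b) at_top" by (rule eventually_ge_at_top)
      fix a b :: real assume "a \<le> -A" "A \<le> b"
      then have "\<bar>hs_integral H g a b - L\<bar> \<le> 4 * (B * e)" by (rule est[OF T])
      then show "dist ((\<lambda>(a,b). hs_integral H g a b) (a, b)) L < \<eta>" using eB by (simp add: dist_real_def)
    qed
  qed
  have "hs_integral_R H g = L"
    unfolding hs_integral_R_def by (rule tendsto_Lim[OF _ lim]) (simp add: prod_filter_eq_bot)
  then show "((\<lambda>(a,b). hs_integral H g a b) \<longlongrightarrow> hs_integral_R H g) (at_bot \<times>\<^sub>F at_top)"
    using lim by simp
  show "\<And>e A a b. tailp g e A \<Longrightarrow> a \<le> -A \<Longrightarrow> A \<le> b \<Longrightarrow>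
           \<bar>hs_integral H g a b - hs_integral_R H g\<bar> \<le> 4 * (B * e)"
    using est \<open>hs_integral_R H g = L\<close> by simp
qed


definition Hx :: "(real \<Rightarrow> real) \<Rightarrow> real \<Rightarrow> real \<Rightarrow> real" where
  "Hx F x = (\<lambda>y. lim_top F - F (x - y))"

lemma conv_Hx: "conv F g x = lim_top F * lim_top g - hs_integral_R (Hx F x) g"
  unfolding conv_def Hx_def by simp

lemma Hx_bound:
  assumes "B_C F"
  obtains BH where "BH \<ge> 0" "\<And>x t. \<bar>Hx F x t\<bar> \<le> BH"
proof -
  obtain B where B: "B \<ge> 0" "\<And>x. \<bar>F x\<bar> \<le> B" by (rule BC_bounded[OF assms]) blast
  show ?thesis
  proof (rule that[of "\<bar>lim_top F\<bar> + B"])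
    show "\<bar>lim_top F\<bar> + B \<ge> 0" using B by simp
    fix x t show "\<bar>Hx F x t\<bar> \<le> \<bar>lim_top F\<bar> + B" unfolding Hx_def using B(2)[of "x - t"] by linarith
  qed
qed

lemma Hx_UCR:
  assumes "B_C F"
  shows "UCR (Hx F x)"
  unfolding UCR_def
proof (intro allI impI)
  fix e :: real assume e: "e > 0"
  obtain d where d: "d > 0" "\<forall>x y. \<bar>x - y\<bar> < d \<longrightarrow> \<bar>F x - F y\<bar> \<le> e"
    using BC_UC[OF assms e] by blast
  show "\<exists>d>0. \<forall>s t. \<bar>s - t\<bar> < d \<longrightarrow> \<bar>Hx F x s - Hx F x t\<bar> \<le> e"
  proof (intro exI[of _ d] conjI allI impI)
    show "d > 0" by (rule d(1))
    fix s t :: real assume "\<bar>s - t\<bar> < d"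
    then have "\<bar>(x - t) - (x - s)\<bar> < d" by simp
    then have "\<bar>F (x - t) - F (x - s)\<bar> \<le> e" using d(2) by blast
    then show "\<bar>Hx F x s - Hx F x t\<bar> \<le> e" unfolding Hx_def by simp
  qed
qed

lemma RS_diff: "RS H1 g p - RS H2 g p = RS (\<lambda>t. H1 t - H2 t) g p"
  unfolding RS_snd by (simp add: sum_subtractf[symmetric] left_diff_distrib)

lemma J_diff:
  assumes M: "BVM g M" and U1: "UCR H1" and U2: "UCR H2"
    and D: "\<And>t. \<bar>H1 t - H2 t\<bar> \<le> \<eta>" and ab: "a \<le> b"
  shows "\<bar>hs_integral H1 g a b - hs_integral H2 g a b\<bar> \<le> \<eta> * M"
proof (rule field_le_epsilon)
  fix e :: real assume e: "e > 0"
  obtain d1 where d1: "d1 > 0" "\<And>a b p. a \<le> b \<Longrightarrow> p tagged_division_of {a..b} \<Longrightarrow> (\<lambda>x. ball x d1) fine p \<Longrightarrow>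
     \<bar>RS H1 g p - hs_integral H1 g a b\<bar> \<le> e/2" by (rule approx[OF M U1 half_gt_zero[OF e]]) blast
  obtain d2 where d2: "d2 > 0" "\<And>a b p. a \<le> b \<Longrightarrow> p tagged_division_of {a..b} \<Longrightarrow> (\<lambda>x. ball x d2) fine p \<Longrightarrow>
     \<bar>RS H2 g p - hs_integral H2 g a b\<bar> \<le> e/2" by (rule approx[OF M U2 half_gt_zero[OF e]]) blast
  obtain p where p: "p tagged_division_of {a..b}" "(\<lambda>x. ball x d1 \<inter> ball x d2) fine p"
    by (rule fine_division_exists_real[OF gauge_Int[OF gauge_ball[OF d1(1)] gauge_ball[OF d2(1)]]])
  have f: "(\<lambda>x. ball x d1) fine p" "(\<lambda>x. ball x d2) fine p" using p(2) unfolding fine_Int by auto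
  have eta0: "\<eta> \<ge> 0" using D[of 0] by simp
  have "\<bar>RS (\<lambda>t. H1 t - H2 t) g p\<bar> \<le> \<eta> * M"
    by (rule RS_bound[OF p(1) D eta0 M_division[OF M p(1)]])
  moreover note d1(2)[OF ab p(1) f(1)] d2(2)[OF ab p(1) f(2)]
  ultimately show "\<bar>hs_integral H1 g a b - hs_integral H2 g a b\<bar> \<le> \<eta> * M + e"
    unfolding RS_diff[symmetric] by linarith
qed

lemma JR_diff:
  assumes g: "AC_bar g" and M: "BVM g M" and U1: "UCR H1" and U2: "UCR H2"
    and B1: "\<And>t. \<bar>H1 t\<bar> \<le> B1" and B2: "\<And>t. \<bar>H2 t\<bar> \<le> B2"
    and D: "\<And>t. \<bar>H1 t - H2 t\<bar> \<le> \<eta>"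
  shows "\<bar>hs_integral_R H1 g - hs_integral_R H2 g\<bar> \<le> \<eta> * M"
proof -
  have L: "((\<lambda>x. \<bar>(\<lambda>(a,b). hs_integral H1 g a b) x - (\<lambda>(a,b). hs_integral H2 g a b) x\<bar>) \<longlongrightarrow>
      \<bar>hs_integral_R H1 g - hs_integral_R H2 g\<bar>) (at_bot \<times>\<^sub>F at_top)"
    by (intro tendsto_intros JR(1)[OF g M U1 B1] JR(1)[OF g M U2 B2])
  have ev: "eventually (\<lambda>x. \<bar>(\<lambda>(a,b). hs_integral H1 g a b) x - (\<lambda>(a,b). hs_integral H2 g a b) x\<bar> \<le> \<eta> * M)
      (at_bot \<times>\<^sub>F at_top)"
    unfolding eventually_prod_filter
  proof (intro exI conjI allI impI)
    show "eventually (\<lambda>a::real. a \<le> 0) at_bot" by (rule eventually_le_at_bot)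
    show "eventually (\<lambda>b::real. 0 \<le> b) at_top" by (rule eventually_ge_at_top)
    fix a b :: real assume "a \<le> 0" "0 \<le> b"
    then have "a \<le> b" by simp
    then show "\<bar>(\<lambda>(a,b). hs_integral H1 g a b) (a, b) - (\<lambda>(a,b). hs_integral H2 g a b) (a, b)\<bar> \<le> \<eta> * M"
      using J_diff[OF M U1 U2 D] by simp
  qed
  show ?thesis by (rule tendsto_upperbound[OF L ev]) (simp add: prod_filter_eq_bot)
qed

lemma conv_cont:
  assumes F: "B_C F" and g: "AC_bar g"
  shows "continuous_on UNIV (conv F g)"
proof -
  obtain M where M: "BVM g M" by (rule AC_bar_BVM[OF g])
  obtain BH where BH: "BH \<ge> 0" "\<And>x t. \<bar>Hx F x t\<bar> \<le> BH" by (rule Hx_bound[OF F]) blast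
  have "isCont (conv F g) x0" for x0
    unfolding continuous_at_eps_delta
  proof (intro allI impI)
    fix e :: real assume e: "e > 0"
    define \<eta> where "\<eta> = e / (2 * (M + 1))"
    have eta: "\<eta> > 0" using e BVM_nonneg[OF M] unfolding \<eta>_def by simp
    have etaM: "\<eta> * M < e" using e BVM_nonneg[OF M] unfolding \<eta>_def
      by (simp add: field_simps) (intro add_nonneg_pos mult_nonneg_nonneg; simp)
    obtain d where d: "d > 0" "\<forall>x y. \<bar>x - y\<bar> < d \<longrightarrow> \<bar>F x - F y\<bar> \<le> \<eta>"
      using BC_UC[OF F eta] by blast
    show "\<exists>d>0. \<forall>x. dist x x0 < d \<longrightarrow> dist (conv F g x) (conv F g x0) < e"
    proof (intro exI[of _ d] conjI allI impI)
      show "d > 0" by (rule d(1))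
      fix x assume "dist x x0 < d"
      then have xx: "\<bar>x - x0\<bar> < d" by (simp add: dist_real_def)
      have D: "\<bar>Hx F x t - Hx F x0 t\<bar> \<le> \<eta>" for t
      proof -
        have "\<bar>(x0 - t) - (x - t)\<bar> < d" using xx by simp
        then have "\<bar>F (x0 - t) - F (x - t)\<bar> \<le> \<eta>" using d(2) by blast
        then show ?thesis unfolding Hx_def by simp
      qed
      have "\<bar>hs_integral_R (Hx F x) g - hs_integral_R (Hx F x0) g\<bar> \<le> \<eta> * M"
        by (rule JR_diff[OF g M Hx_UCR[OF F] Hx_UCR[OF F] BH(2) BH(2) D])
      then show "dist (conv F g x) (conv F g x0) < e"
        unfolding conv_Hx dist_real_def using etaM by linarith
    qed
  qed
  then show ?thesis by (simp add: continuous_at_imp_continuous_on)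
qed


lemma cont_bound:
  assumes "continuous_on {a..b} (f :: real \<Rightarrow> real)"
  obtains B where "B \<ge> 0" "\<And>x. x \<in> {a..b} \<Longrightarrow> \<bar>f x\<bar> \<le> B"
proof -
  have "compact (f ` {a..b})" by (rule compact_continuous_image[OF assms]) simp
  then have "bounded (f ` {a..b})" by (rule compact_imp_bounded)
  then obtain R where R: "\<forall>y\<in>f ` {a..b}. norm y \<le> R" unfolding bounded_iff by blast
  show ?thesis
  proof (rule that[of "\<bar>R\<bar>"])
    show "\<bar>R\<bar> \<ge> 0" by simp
    fix x assume "x \<in> {a..b}"
    then show "\<bar>f x\<bar> \<le> \<bar>R\<bar>" using R by force
  qed
qed

lemma cont_UC:
  assumes "continuous_on {a..b} (f :: real \<Rightarrow> real)" "e > 0"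
  obtains d where "d > 0" "\<And>x y. x \<in> {a..b} \<Longrightarrow> y \<in> {a..b} \<Longrightarrow> \<bar>x - y\<bar> < d \<Longrightarrow> \<bar>f x - f y\<bar> < e"
proof -
  have "uniformly_continuous_on {a..b} f" by (rule compact_uniformly_continuous[OF assms(1)]) simp
  then obtain d where d: "d > 0" "\<forall>x\<in>{a..b}. \<forall>x'\<in>{a..b}. dist x' x < d \<longrightarrow> dist (f x') (f x) < e"
    unfolding uniformly_continuous_on_def using assms(2) by blast
  show ?thesis
  proof (rule that[OF d(1)])
    fix x y assume "x \<in> {a..b}" "y \<in> {a..b}" "\<bar>x - y\<bar> < d"
    then show "\<bar>f x - f y\<bar> < e" using d(2) by (auto simp: dist_real_def abs_minus_commute)
  qed
qed

lemma sum_content_bound: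
  fixes p :: "(real \<times> real set) set"
  assumes p: "p tagged_division_of {a..b}" and ab: "a \<le> b" and c: "c \<ge> 0"
    and X: "\<And>t K. (t,K) \<in> p \<Longrightarrow> \<bar>X t K\<bar> \<le> c * content K"
  shows "\<bar>\<Sum>(t,K)\<in>p. X t K\<bar> \<le> c * (b - a)"
proof -
  have "\<bar>\<Sum>(t,K)\<in>p. X t K\<bar> \<le> (\<Sum>(t,K)\<in>p. c * content K)"
    by (rule order.trans[OF sum_abs]) (rule sum_mono, use X in auto)
  also have "\<dots> = c * (\<Sum>(t,K)\<in>p. content K)" by (simp add: sum_distrib_left split_def)
  also have "(\<Sum>(t,K)\<in>p. content K) = content (cbox a b)"
    by (rule additive_content_tagged_division) (use p in simp)
  also have "content (cbox a b) = b - a" using ab by simp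
  finally show ?thesis .
qed

lemma tagged_fine_info:
  fixes p :: "(real \<times> real set) set"
  assumes p: "p tagged_division_of {a..b}" and f: "(\<lambda>x. ball x d) fine p" and tK: "(t,K) \<in> p"
  obtains u v where "K = {u..v}" "u \<le> t" "t \<le> v" "a \<le> u" "v \<le> b" "\<bar>v - t\<bar> < d" "\<bar>t - u\<bar> < d"
proof -
  obtain u v where uv: "K = {u..v}" "u \<le> t" "t \<le> v" using tagged_interval[OF p tK] by blast
  have sub: "K \<subseteq> {a..b}" using tagged_division_ofD(3)[OF p tK] .
  have "K \<subseteq> ball t d" using fineD[OF f tK] .
  moreover have "u \<in> K" "v \<in> K" using uv by auto
  ultimately have "u \<in> ball t d" "v \<in> ball t d" by blast+
  then have "\<bar>v - t\<bar> < d" "\<bar>t - u\<bar> < d" by (auto simp: dist_real_def abs_minus_commute)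
  moreover have "a \<le> u" "v \<le> b" using sub uv by auto
  ultimately show ?thesis using that uv by blast
qed

lemma MVT_bound:
  assumes uv: "u \<le> v" and d: "\<And>y. y \<in> {u..v} \<Longrightarrow> (f has_real_derivative f' y) (at y)"
    and B: "\<And>y. y \<in> {u..v} \<Longrightarrow> \<bar>f' y - c\<bar> \<le> B"
  shows "\<bar>f v - f u - (v - u) * c\<bar> \<le> B * (v - u)"
proof (cases "u = v")
  case True then show ?thesis by simp
next
  case False
  then have "u < v" using uv by simp
  then obtain z where z: "u < z" "z < v" "f v - f u = (v - u) * f' z"
    using MVT2[of u v f f'] d by force
  have "\<bar>f v - f u - (v - u) * c\<bar> = (v - u) * \<bar>f' z - c\<bar>"
    using z uv by (simp add: abs_mult right_diff_distrib[symmetric])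
  also have "\<dots> \<le> (v - u) * B" using B[of z] z uv by (intro mult_left_mono) auto
  finally show ?thesis by (simp add: mult.commute)
qed

lemma RSR:
  assumes ab: "a \<le> b" and dg: "\<And>y. (g has_real_derivative G y) (at y)"
    and Gc: "continuous_on {a..b} G" and Hc: "continuous_on {a..b} H"
  shows "hs_has_integral H g (integral {a..b} (\<lambda>y. H y * G y)) {a..b}"
  unfolding hs_has_integral_RS
proof (intro allI impI)
  fix e :: real assume e: "e > 0"
  define I where "I = integral {a..b} (\<lambda>y. H y * G y)"
  have HG: "((\<lambda>y. H y * G y) has_integral I) {a..b}"
    unfolding I_def by (intro integrable_integral integrable_continuous_real continuous_on_mult Hc Gc)
  obtain \<gamma>1 where g1: "gauge \<gamma>1" "\<And>p. p tagged_division_of {a..b} \<Longrightarrow> \<gamma>1 fine p \<Longrightarrow>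
      norm ((\<Sum>(x,k)\<in>p. content k *\<^sub>R (H x * G x)) - I) < e/2"
  proof -
    have "\<exists>\<gamma>. gauge \<gamma> \<and> (\<forall>p. p tagged_division_of {a..b} \<and> \<gamma> fine p \<longrightarrow>
        norm ((\<Sum>(x,k)\<in>p. content k *\<^sub>R (H x * G x)) - I) < e/2)"
      using HG[unfolded has_integral_real, rule_format, OF half_gt_zero[OF e]] .
    then obtain \<gamma> where \<gamma>: "gauge \<gamma>" "\<forall>p. p tagged_division_of {a..b} \<and> \<gamma> fine p \<longrightarrow>
        norm ((\<Sum>(x,k)\<in>p. content k *\<^sub>R (H x * G x)) - I) < e/2" by blast
    show ?thesis by (rule that[OF \<gamma>(1)]) (use \<gamma>(2) in blast)
  qed
  obtain BH where BH: "BH \<ge> 0" "\<And>x. x \<in> {a..b} \<Longrightarrow> \<bar>H x\<bar> \<le> BH" by (rule cont_bound[OF Hc]) blast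
  define \<eta> where "\<eta> = e / (2 * (BH + 1) * (b - a + 1))"
  have eta: "\<eta> > 0" using e BH(1) ab unfolding \<eta>_def by simp
  have etab: "BH * \<eta> * (b - a) < e/2"
  proof -
    have "BH * \<eta> * (b - a) = e/2 * (BH / (BH + 1)) * ((b - a) / (b - a + 1))"
      unfolding \<eta>_def using BH(1) ab by (simp add: field_simps)
    also have "\<dots> < e/2" 
    proof -
      have "BH / (BH + 1) < 1" "(b - a) / (b - a + 1) < 1" "BH / (BH + 1) \<ge> 0" "(b - a) / (b - a + 1) \<ge> 0"
        using BH(1) ab by auto
      then have "(BH / (BH + 1)) * ((b - a) / (b - a + 1)) \<le> (BH / (BH + 1)) * 1"
        by (intro mult_left_mono) auto
      then have "(BH / (BH + 1)) * ((b - a) / (b - a + 1)) < 1" using \<open>BH / (BH + 1) < 1\<close> by linarith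
      then have "e/2 * ((BH / (BH + 1)) * ((b - a) / (b - a + 1))) < e/2 * 1"
        by (rule mult_strict_left_mono) (use e in simp)
      moreover have "e/2 * (BH / (BH + 1)) * ((b - a) / (b - a + 1)) = e/2 * ((BH / (BH + 1)) * ((b - a) / (b - a + 1)))"
        by (simp only: mult.assoc)
      ultimately show ?thesis by linarith
    qed
    finally show ?thesis .
  qed
  obtain \<delta> where \<delta>: "\<delta> > 0" "\<And>x y. x \<in> {a..b} \<Longrightarrow> y \<in> {a..b} \<Longrightarrow> \<bar>x - y\<bar> < \<delta> \<Longrightarrow> \<bar>G x - G y\<bar> < \<eta>"
    by (rule cont_UC[OF Gc eta]) blast
  show "\<exists>\<gamma>. gauge \<gamma> \<and> (\<forall>p. p tagged_division_of {a..b} \<and> \<gamma> fine p \<longrightarrow> \<bar>RS H g p - I\<bar> < e)"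
  proof (intro exI[of _ "\<lambda>x. \<gamma>1 x \<inter> ball x \<delta>"] conjI allI impI)
    show "gauge (\<lambda>x. \<gamma>1 x \<inter> ball x \<delta>)" by (rule gauge_Int[OF g1(1) gauge_ball[OF \<delta>(1)]])
    fix p assume "p tagged_division_of {a..b} \<and> (\<lambda>x. \<gamma>1 x \<inter> ball x \<delta>) fine p"
    then have p: "p tagged_division_of {a..b}" "\<gamma>1 fine p" "(\<lambda>x. ball x \<delta>) fine p"
      unfolding fine_Int by auto
    have S: "\<bar>(\<Sum>(x,k)\<in>p. content k *\<^sub>R (H x * G x)) - I\<bar> < e/2" using g1(2)[OF p(1,2)] by simp
    have T: "\<bar>\<Sum>(t,K)\<in>p. H t * Dg g K - content K * (H t * G t)\<bar> \<le> (BH * \<eta>) * (b - a)"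
    proof (rule sum_content_bound[OF p(1) ab])
      show "BH * \<eta> \<ge> 0" using BH(1) eta by simp
      fix t K assume tK: "(t,K) \<in> p"
      obtain u v where uv: "K = {u..v}" "u \<le> t" "t \<le> v" "a \<le> u" "v \<le> b" "\<bar>v - t\<bar> < \<delta>" "\<bar>t - u\<bar> < \<delta>"
        by (rule tagged_fine_info[OF p(1) p(3) tK]) blast
      have "\<bar>g v - g u - (v - u) * G t\<bar> \<le> \<eta> * (v - u)"
      proof (rule MVT_bound)
        show "u \<le> v" using uv by simp
        show "\<And>y. y \<in> {u..v} \<Longrightarrow> (g has_real_derivative G y) (at y)" using dg by blast
        fix y assume y: "y \<in> {u..v}"
        have "\<bar>y - t\<bar> < \<delta>" using y uv by auto
        then show "\<bar>G y - G t\<bar> \<le> \<eta>" using \<delta>(2)[of y t] y uv by force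
      qed
      moreover have "\<bar>H t\<bar> \<le> BH" using BH(2)[of t] uv by simp
      ultimately have "\<bar>H t\<bar> * \<bar>g v - g u - (v - u) * G t\<bar> \<le> BH * (\<eta> * (v - u))"
        by (intro mult_mono) auto
      moreover have "H t * Dg g K - content K * (H t * G t) = H t * (g v - g u - (v - u) * G t)"
        using uv by (simp add: Dg_interval algebra_simps)
      ultimately show "\<bar>H t * Dg g K - content K * (H t * G t)\<bar> \<le> BH * \<eta> * content K"
        using uv by (simp add: abs_mult mult.assoc)
    qed
    have "RS H g p - I = (\<Sum>(t,K)\<in>p. H t * Dg g K - content K * (H t * G t)) +
        ((\<Sum>(x,k)\<in>p. content k *\<^sub>R (H x * G x)) - I)"
      unfolding RS_def by (simp add: sum_subtractf split_def)
    then show "\<bar>RS H g p - I\<bar> < e" using S T etab by linarith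
  qed
qed


lemma eta_small:
  fixes c L e :: real
  assumes c: "c \<ge> 0" and L: "L \<ge> 0" and e: "e > 0"
  shows "c * (e / (2 * (c + 1) * (L + 1))) * L < e/2"
proof -
  have "c * (e / (2 * (c + 1) * (L + 1))) * L = e/2 * ((c / (c + 1)) * (L / (L + 1)))"
    using c L by (simp add: field_simps)
  also have "\<dots> < e/2"
  proof -
    have "c / (c + 1) < 1" "L / (L + 1) \<le> 1" "c / (c + 1) \<ge> 0" using c L by auto
    then have "(c / (c + 1)) * (L / (L + 1)) \<le> (c / (c + 1)) * 1" by (intro mult_left_mono) auto
    then have "(c / (c + 1)) * (L / (L + 1)) < 1" using \<open>c / (c + 1) < 1\<close> by linarith
    then have "e/2 * ((c / (c + 1)) * (L / (L + 1))) < e/2 * 1"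
      by (rule mult_strict_left_mono) (use e in simp)
    then show ?thesis by simp
  qed
  finally show ?thesis .
qed

lemma lip_bound:
  assumes xy: "x \<le> y" and d: "\<And>z. z \<in> {x..y} \<Longrightarrow> (f has_real_derivative f' z) (at z)"
    and B: "\<And>z. z \<in> {x..y} \<Longrightarrow> \<bar>f' z\<bar> \<le> B"
  shows "\<bar>f y - f x\<bar> \<le> B * (y - x)"
  using MVT_bound[OF xy d, of 0 B] B by simp

lemma ibp_alg:
  fixes Pv Pu Pt Gv Gu Gt v u p :: real
  shows "Pv * Gv - Pu * Gu - (Pt * (Gv - Gu) + (v - u) * (Gt * p)) =
    (Pv - Pt) * (Gv - Gt) - (Pu - Pt) * (Gu - Gt) + Gt * (Pv - Pu - (v - u) * p)"
  by (simp add: algebra_simps)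

lemma IBP:
  assumes ab: "a \<le> b" and dP: "\<And>y. y \<in> {a..b} \<Longrightarrow> (P has_real_derivative p y) (at y)"
    and pc: "continuous_on {a..b} p" and Gc: "continuous_on {a..b} G"
  shows "hs_has_integral P G (P b * G b - P a * G a - integral {a..b} (\<lambda>y. G y * p y)) {a..b}"
  unfolding hs_has_integral_RS
proof (intro allI impI)
  fix e :: real assume e: "e > 0"
  define I where "I = integral {a..b} (\<lambda>y. G y * p y)"
  have HG: "((\<lambda>y. G y * p y) has_integral I) {a..b}"
    unfolding I_def by (intro integrable_integral integrable_continuous_real continuous_on_mult pc Gc)
  obtain \<gamma>1 where g1: "gauge \<gamma>1" "\<And>q. q tagged_division_of {a..b} \<Longrightarrow> \<gamma>1 fine q \<Longrightarrow>
      norm ((\<Sum>(x,k)\<in>q. content k *\<^sub>R (G x * p x)) - I) < e/2"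
  proof -
    have "\<exists>\<gamma>. gauge \<gamma> \<and> (\<forall>q. q tagged_division_of {a..b} \<and> \<gamma> fine q \<longrightarrow>
        norm ((\<Sum>(x,k)\<in>q. content k *\<^sub>R (G x * p x)) - I) < e/2)"
      using HG[unfolded has_integral_real, rule_format, OF half_gt_zero[OF e]] .
    then obtain \<gamma> where \<gamma>: "gauge \<gamma>" "\<forall>q. q tagged_division_of {a..b} \<and> \<gamma> fine q \<longrightarrow>
        norm ((\<Sum>(x,k)\<in>q. content k *\<^sub>R (G x * p x)) - I) < e/2" by blast
    show ?thesis by (rule that[OF \<gamma>(1)]) (use \<gamma>(2) in blast)
  qed
  obtain BG where BG: "BG \<ge> 0" "\<And>x. x \<in> {a..b} \<Longrightarrow> \<bar>G x\<bar> \<le> BG" by (rule cont_bound[OF Gc]) blast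
  obtain Lp where Lp: "Lp \<ge> 0" "\<And>x. x \<in> {a..b} \<Longrightarrow> \<bar>p x\<bar> \<le> Lp" by (rule cont_bound[OF pc]) blast
  define c where "c = Lp + BG"
  have c0: "c \<ge> 0" using BG Lp unfolding c_def by simp
  define \<eta> where "\<eta> = e / (2 * (c + 1) * ((b - a) + 1))"
  have eta: "\<eta> > 0" using e c0 ab unfolding \<eta>_def by simp
  have etab: "c * \<eta> * (b - a) < e/2" unfolding \<eta>_def by (rule eta_small[OF c0 _ e]) (use ab in simp)
  obtain \<delta>1 where \<delta>1: "\<delta>1 > 0" "\<And>x y. x \<in> {a..b} \<Longrightarrow> y \<in> {a..b} \<Longrightarrow> \<bar>x - y\<bar> < \<delta>1 \<Longrightarrow> \<bar>G x - G y\<bar> < \<eta>"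
    by (rule cont_UC[OF Gc eta]) blast
  obtain \<delta>2 where \<delta>2: "\<delta>2 > 0" "\<And>x y. x \<in> {a..b} \<Longrightarrow> y \<in> {a..b} \<Longrightarrow> \<bar>x - y\<bar> < \<delta>2 \<Longrightarrow> \<bar>p x - p y\<bar> < \<eta>"
    by (rule cont_UC[OF pc eta]) blast
  define \<delta> where "\<delta> = min \<delta>1 \<delta>2"
  have \<delta>0: "\<delta> > 0" using \<delta>1 \<delta>2 unfolding \<delta>_def by simp
  show "\<exists>\<gamma>. gauge \<gamma> \<and> (\<forall>q. q tagged_division_of {a..b} \<and> \<gamma> fine q \<longrightarrow>
      \<bar>RS P G q - (P b * G b - P a * G a - I)\<bar> < e)"
  proof (intro exI[of _ "\<lambda>x. \<gamma>1 x \<inter> ball x \<delta>"] conjI allI impI)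
    show "gauge (\<lambda>x. \<gamma>1 x \<inter> ball x \<delta>)" by (rule gauge_Int[OF g1(1) gauge_ball[OF \<delta>0]])
    fix q assume "q tagged_division_of {a..b} \<and> (\<lambda>x. \<gamma>1 x \<inter> ball x \<delta>) fine q"
    then have q: "q tagged_division_of {a..b}" "\<gamma>1 fine q" "(\<lambda>x. ball x \<delta>) fine q"
      unfolding fine_Int by auto
    have S: "\<bar>(\<Sum>(x,k)\<in>q. content k *\<^sub>R (G x * p x)) - I\<bar> < e/2" using g1(2)[OF q(1,2)] by simp
    have add: "(\<Sum>(x,K)\<in>q. (\<lambda>y. P y * G y) (Sup K) - (\<lambda>y. P y * G y) (Inf K)) = P b * G b - P a * G a"
      by (rule additive_tagged_division_1[OF ab q(1)])
    have T: "\<bar>\<Sum>(t,K)\<in>q. ((\<lambda>y. P y * G y) (Sup K) - (\<lambda>y. P y * G y) (Inf K)) - (P t * Dg G K + content K * (G t * p t))\<bar>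
        \<le> (c * \<eta>) * (b - a)"
    proof (rule sum_content_bound[OF q(1) ab])
      show "c * \<eta> \<ge> 0" using c0 eta by simp
      fix t K assume tK: "(t,K) \<in> q"
      obtain u v where uv: "K = {u..v}" "u \<le> t" "t \<le> v" "a \<le> u" "v \<le> b" "\<bar>v - t\<bar> < \<delta>" "\<bar>t - u\<bar> < \<delta>"
        by (rule tagged_fine_info[OF q(1) q(3) tK]) blast
      have uvab: "{u..v} \<subseteq> {a..b}" using uv by auto
      have E1: "\<bar>P v - P t\<bar> \<le> Lp * (v - t)"
        by (rule lip_bound[where f'=p]) (use uv dP Lp(2) in auto)
      have E2: "\<bar>P u - P t\<bar> \<le> Lp * (t - u)"
      proof -
        have "\<bar>P t - P u\<bar> \<le> Lp * (t - u)" by (rule lip_bound[where f'=p]) (use uv dP Lp(2) in auto)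
        then show ?thesis by (simp add: abs_minus_commute)
      qed
      have E3: "\<bar>G v - G t\<bar> \<le> \<eta>" "\<bar>G u - G t\<bar> \<le> \<eta>"
        using \<delta>1(2)[of v t] \<delta>1(2)[of u t] uv unfolding \<delta>_def by (auto simp: abs_minus_commute)
      have E4: "\<bar>P v - P u - (v - u) * p t\<bar> \<le> \<eta> * (v - u)"
      proof (rule MVT_bound)
        show "u \<le> v" using uv by simp
        show "\<And>y. y \<in> {u..v} \<Longrightarrow> (P has_real_derivative p y) (at y)" using dP uvab by blast
        fix y assume y: "y \<in> {u..v}"
        have "\<bar>y - t\<bar> < \<delta>2" using y uv unfolding \<delta>_def by auto
        then show "\<bar>p y - p t\<bar> \<le> \<eta>" using \<delta>2(2)[of y t] y uv by force
      qed
      have Gt: "\<bar>G t\<bar> \<le> BG" using BG(2)[of t] uv by simp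
      have "\<bar>(P v - P t) * (G v - G t)\<bar> \<le> Lp * (v - t) * \<eta>"
        unfolding abs_mult by (rule mult_mono) (use E1 E3 Lp in auto)
      moreover have "\<bar>(P u - P t) * (G u - G t)\<bar> \<le> Lp * (t - u) * \<eta>"
        unfolding abs_mult by (rule mult_mono) (use E2 E3 Lp uv in auto)
      moreover have "\<bar>G t * (P v - P u - (v - u) * p t)\<bar> \<le> BG * (\<eta> * (v - u))"
        unfolding abs_mult by (rule mult_mono) (use Gt E4 BG in auto)
      moreover have "(\<lambda>y. P y * G y) (Sup K) - (\<lambda>y. P y * G y) (Inf K) - (P t * Dg G K + content K * (G t * p t))
          = (P v - P t) * (G v - G t) - (P u - P t) * (G u - G t) + G t * (P v - P u - (v - u) * p t)"
        using uv by (simp add: Dg_interval ibp_alg[symmetric])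
      ultimately show "\<bar>(\<lambda>y. P y * G y) (Sup K) - (\<lambda>y. P y * G y) (Inf K) - (P t * Dg G K + content K * (G t * p t))\<bar>
          \<le> c * \<eta> * content K"
        using uv unfolding c_def by (simp add: algebra_simps)
    qed
    have "RS P G q - (P b * G b - P a * G a - I) =
        - (\<Sum>(t,K)\<in>q. ((\<lambda>y. P y * G y) (Sup K) - (\<lambda>y. P y * G y) (Inf K)) - (P t * Dg G K + content K * (G t * p t)))
        - ((\<Sum>(x,k)\<in>q. content k *\<^sub>R (G x * p x)) - I)"
      unfolding add[symmetric] RS_def by (simp add: sum_subtractf sum.distrib split_def)
    then show "\<bar>RS P G q - (P b * G b - P a * G a - I)\<bar> < e" using S T etab by linarith
  qed
qed


lemma J_has_err:
  assumes M: "BVM g M" and U: "UCR H" and ab: "a \<le> b"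
  shows "hs_has_integral H g (hs_integral H g a b) {a..b}"
    and "\<And>d e p. d > 0 \<Longrightarrow> (\<And>s t. \<bar>s - t\<bar> < 2*d \<Longrightarrow> \<bar>H s - H t\<bar> \<le> e) \<Longrightarrow>
       p tagged_division_of {a..b} \<Longrightarrow> (\<lambda>x. ball x d) fine p \<Longrightarrow>
       \<bar>RS H g p - hs_integral H g a b\<bar> \<le> e * M"
proof -
  have UC: "\<exists>d>0. \<forall>s\<in>{a..b}. \<forall>t\<in>{a..b}. \<bar>s - t\<bar> < d \<longrightarrow> \<bar>H s - H t\<bar> \<le> e'" if e'0: "e' > 0" for e'
  proof -
    obtain d where "d > 0" "\<And>s t. \<bar>s - t\<bar> < d \<Longrightarrow> \<bar>H s - H t\<bar> \<le> e'"
      by (rule UCR_D[OF U e'0]) blast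
    then show ?thesis by blast
  qed
  have EXab: "hs_has_integral H g (hs_integral H g a b) {a..b} \<and>
     (\<forall>e d p. d > 0 \<longrightarrow> (\<forall>s\<in>{a..b}. \<forall>t\<in>{a..b}. \<bar>s - t\<bar> < 2*d \<longrightarrow> \<bar>H s - H t\<bar> \<le> e)
        \<longrightarrow> p tagged_division_of {a..b} \<longrightarrow> (\<lambda>x. ball x d) fine p \<longrightarrow> \<bar>RS H g p - hs_integral H g a b\<bar> \<le> e * M)"
  proof (rule EX[OF ab BVM_nonneg[OF M]])
    show "\<And>D. D division_of {a..b} \<Longrightarrow> (\<Sum>X\<in>D. \<bar>Dg g X\<bar>) \<le> M" by (rule BVM_D[OF M])
    show "\<And>e. e > 0 \<Longrightarrow> \<exists>d>0. \<forall>s\<in>{a..b}. \<forall>t\<in>{a..b}. \<bar>s - t\<bar> < d \<longrightarrow> \<bar>H s - H t\<bar> \<le> e"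
      by (rule UC)
  qed
  show "hs_has_integral H g (hs_integral H g a b) {a..b}" using EXab by blast
  fix d e p assume d: "d > 0" and He: "\<And>s t. \<bar>s - t\<bar> < 2*d \<Longrightarrow> \<bar>H s - H t\<bar> \<le> e"
    and p: "p tagged_division_of {a..b}" "(\<lambda>x. ball x d) fine p"
  have "\<forall>s\<in>{a..b}. \<forall>t\<in>{a..b}. \<bar>s - t\<bar> < 2*d \<longrightarrow> \<bar>H s - H t\<bar> \<le> e" using He by blast
  then show "\<bar>RS H g p - hs_integral H g a b\<bar> \<le> e * M" using conjunct2[OF EXab] d p by blast
qed

lemma J_cont_t:
  assumes F: "B_C F" and M: "BVM G M" and ab: "a \<le> b"
  shows "continuous_on UNIV (\<lambda>t. hs_integral (Hx F t) G a b)"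
proof -
  have "isCont (\<lambda>t. hs_integral (Hx F t) G a b) x0" for x0
    unfolding continuous_at_eps_delta
  proof (intro allI impI)
    fix e :: real assume e: "e > 0"
    define \<eta> where "\<eta> = e / (2 * (M + 1))"
    have eta: "\<eta> > 0" using e BVM_nonneg[OF M] unfolding \<eta>_def by simp
    have etaM: "\<eta> * M < e" using e BVM_nonneg[OF M] unfolding \<eta>_def
      by (simp add: field_simps) (intro add_nonneg_pos mult_nonneg_nonneg; simp)
    obtain d where d: "d > 0" "\<forall>x y. \<bar>x - y\<bar> < d \<longrightarrow> \<bar>F x - F y\<bar> \<le> \<eta>"
      using BC_UC[OF F eta] by blast
    show "\<exists>d>0. \<forall>x. dist x x0 < d \<longrightarrow> dist (hs_integral (Hx F x) G a b) (hs_integral (Hx F x0) G a b) < e"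
    proof (intro exI[of _ d] conjI allI impI)
      show "d > 0" by (rule d(1))
      fix x assume "dist x x0 < d"
      then have xx: "\<bar>x - x0\<bar> < d" by (simp add: dist_real_def)
      have D: "\<bar>Hx F x t - Hx F x0 t\<bar> \<le> \<eta>" for t
      proof -
        have "\<bar>(x0 - t) - (x - t)\<bar> < d" using xx by simp
        then have "\<bar>F (x0 - t) - F (x - t)\<bar> \<le> \<eta>" using d(2) by blast
        then show ?thesis unfolding Hx_def by simp
      qed
      have "\<bar>hs_integral (Hx F x) G a b - hs_integral (Hx F x0) G a b\<bar> \<le> \<eta> * M"
        by (rule J_diff[OF M Hx_UCR[OF F] Hx_UCR[OF F] D ab])
      then show "dist (hs_integral (Hx F x) G a b) (hs_integral (Hx F x0) G a b) < e"
        unfolding dist_real_def using etaM by linarith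
    qed
  qed
  then show ?thesis by (simp add: continuous_at_imp_continuous_on)
qed

lemma JR_cont_t:
  assumes F: "B_C F" and G: "AC_bar G"
  shows "continuous_on UNIV (\<lambda>t. hs_integral_R (Hx F t) G)"
proof -
  have eq: "(\<lambda>t. lim_top F * lim_top G - conv F G t) = (\<lambda>t. hs_integral_R (Hx F t) G)"
    by (simp add: conv_Hx)
  show ?thesis unfolding eq[symmetric]
    by (intro continuous_intros conv_cont[OF F G])
qed

lemma Hx_cont:
  assumes "B_C F"
  shows "continuous_on S (\<lambda>t. Hx F t y)"
proof -
  have c: "continuous_on UNIV F" using assms unfolding B_C_def by blast
  have "continuous_on S (\<lambda>t. F (t - y))"
    by (rule continuous_on_compose2[OF c]) (auto intro: continuous_intros)
  then show ?thesis unfolding Hx_def by (intro continuous_intros)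
qed

lemma Fubini:
  assumes F: "B_C F" and M: "BVM G M" and ab: "a \<le> b" and au: "a0 \<le> u"
    and Phi: "\<And>y. y \<in> {a..b} \<Longrightarrow> ((\<lambda>t. Hx F t y) has_integral Phi y) {a0..u}"
  shows "hs_has_integral Phi G (integral {a0..u} (\<lambda>t. hs_integral (Hx F t) G a b)) {a..b}"
  unfolding hs_has_integral_RS
proof (intro allI impI)
  fix e :: real assume e: "e > 0"
  define L where "L = integral {a0..u} (\<lambda>t. hs_integral (Hx F t) G a b)"
  have M0: "M \<ge> 0" by (rule BVM_nonneg[OF M])
  define e' where "e' = e / (2 * (M + 1) * ((u - a0) + 1))"
  have e': "e' > 0" using e M0 au unfolding e'_def by simp
  have small: "M * e' * (u - a0) < e/2" unfolding e'_def by (rule eta_small[OF M0 _ e]) (use au in simp)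
  obtain \<delta> where \<delta>: "\<delta> > 0" "\<forall>x y. \<bar>x - y\<bar> < \<delta> \<longrightarrow> \<bar>F x - F y\<bar> \<le> e'"
    using BC_UC[OF F e'] by blast
  show "\<exists>\<gamma>. gauge \<gamma> \<and> (\<forall>p. p tagged_division_of {a..b} \<and> \<gamma> fine p \<longrightarrow> \<bar>RS Phi G p - L\<bar> < e)"
  proof (intro exI[of _ "\<lambda>x. ball x (\<delta>/2)"] conjI allI impI)
    show "gauge (\<lambda>x. ball x (\<delta>/2))" using \<delta>(1) by (simp add: gauge_ball)
    fix p assume "p tagged_division_of {a..b} \<and> (\<lambda>x. ball x (\<delta>/2)) fine p"
    then have p: "p tagged_division_of {a..b}" "(\<lambda>x. ball x (\<delta>/2)) fine p" by auto
    have err: "\<bar>RS (Hx F t) G p - hs_integral (Hx F t) G a b\<bar> \<le> e' * M" for t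
    proof (rule J_has_err(2)[OF M Hx_UCR[OF F] ab _ _ p])
      show "\<delta>/2 > 0" using \<delta>(1) by simp
      fix s s' :: real assume "\<bar>s - s'\<bar> < 2 * (\<delta>/2)"
      then have "\<bar>(t - s') - (t - s)\<bar> < \<delta>" by simp
      then have "\<bar>F (t - s') - F (t - s)\<bar> \<le> e'" using \<delta>(2) by blast
      then show "\<bar>Hx F t s - Hx F t s'\<bar> \<le> e'" unfolding Hx_def by simp
    qed
    have finp: "finite p" using p(1) by blast
    have RSPhi: "((\<lambda>t. RS (Hx F t) G p) has_integral RS Phi G p) {a0..u}"
      unfolding RS_snd
    proof (rule has_integral_sum[OF finp])
      fix x assume "x \<in> p"
      then have "fst x \<in> {a..b}" using tagged_sub_interval[OF p(1)] by blast
      then show "((\<lambda>t. Hx F t (fst x) * Dg G (snd x)) has_integral Phi (fst x) * Dg G (snd x)) {a0..u}"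
        by (intro has_integral_mult_left Phi)
    qed
    have Jint: "((\<lambda>t. hs_integral (Hx F t) G a b) has_integral L) {a0..u}"
      unfolding L_def
      by (intro integrable_integral integrable_continuous_real continuous_on_subset[OF J_cont_t[OF F M ab]]) simp
    have "((\<lambda>t. RS (Hx F t) G p - hs_integral (Hx F t) G a b) has_integral (RS Phi G p - L)) {a0..u}"
      by (rule has_integral_diff[OF RSPhi Jint])
    then have "norm (RS Phi G p - L) \<le> (e' * M) * content (cbox a0 u)"
      by (intro has_integral_bound[where f="\<lambda>t. RS (Hx F t) G p - hs_integral (Hx F t) G a b"])
         (use e' M0 err in \<open>auto simp: box_real\<close>)
    then have "\<bar>RS Phi G p - L\<bar> \<le> M * e' * (u - a0)" using au by (simp add: mult.commute)
    then show "\<bar>RS Phi G p - L\<bar> < e" using small e by linarith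
  qed
qed


lemma PHI:
  assumes F: "B_C F" and au: "a0 \<le> u" and ab: "a \<le> b"
  obtains Phi where "\<And>y. y \<in> {a..b} \<Longrightarrow> (Phi has_real_derivative (F (u - y) - F (a0 - y))) (at y)"
    "\<And>y. y \<in> {a..b} \<Longrightarrow> ((\<lambda>t. Hx F t y) has_integral Phi y) {a0..u}"
proof -
  define f where "f s = lim_top F - F s" for s
  define c1 where "c1 = a0 - b - 1"
  define c2 where "c2 = u - a + 1"
  have Fc: "continuous_on UNIV F" using F unfolding B_C_def by blast
  have fc: "continuous_on {c1..c2} f"
    unfolding f_def by (intro continuous_intros continuous_on_subset[OF Fc]) simp
  obtain P where P: "\<And>x. x \<in> {c1..c2} \<Longrightarrow> (P has_vector_derivative f x) (at x within {c1..c2})"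
    by (rule antiderivative_continuous[OF fc]) blast
  have P': "(P has_real_derivative f z) (at z)" if "c1 < z" "z < c2" for z
  proof -
    have "(P has_vector_derivative f z) (at z within {c1..c2})" using P that by simp
    then have "(P has_vector_derivative f z) (at z)" using at_within_Icc_at[OF that] by simp
    then show ?thesis by (simp add: has_real_derivative_iff_has_vector_derivative)
  qed
  define Phi where "Phi y = P (u - y) - P (a0 - y)" for y
  show ?thesis
  proof (rule that[of Phi])
    fix y assume y: "y \<in> {a..b}"
    have r1: "c1 < u - y" "u - y < c2" "c1 < a0 - y" "a0 - y < c2"
      using y au unfolding c1_def c2_def by auto
    have d1: "((\<lambda>y. P (u - y)) has_real_derivative f (u - y) * (-1)) (at y)"
      by (rule DERIV_chain2[where g="\<lambda>y. u - y", OF P'[OF r1(1,2)]]) (auto intro!: derivative_eq_intros)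
    have d2: "((\<lambda>y. P (a0 - y)) has_real_derivative f (a0 - y) * (-1)) (at y)"
      by (rule DERIV_chain2[where g="\<lambda>y. a0 - y", OF P'[OF r1(3,4)]]) (auto intro!: derivative_eq_intros)
    have "(Phi has_real_derivative (f (u - y) * (-1) - f (a0 - y) * (-1))) (at y)"
      unfolding Phi_def by (rule DERIV_diff[OF d1 d2])
    moreover have "f (u - y) * (-1) - f (a0 - y) * (-1) = F (u - y) - F (a0 - y)" unfolding f_def by simp
    ultimately show "(Phi has_real_derivative (F (u - y) - F (a0 - y))) (at y)" by simp
    have "((\<lambda>t. f (t - y)) has_integral (P (u - y) - P (a0 - y))) {a0..u}"
    proof (rule fundamental_theorem_of_calculus[OF au])
      fix t assume t: "t \<in> {a0..u}"
      have r2: "c1 < t - y" "t - y < c2" using t y unfolding c1_def c2_def by auto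
      have "((\<lambda>t. P (t - y)) has_real_derivative f (t - y) * 1) (at t)"
        by (rule DERIV_chain2[where g="\<lambda>t. t - y", OF P'[OF r2]]) (auto intro!: derivative_eq_intros)
      then have "((\<lambda>t. P (t - y)) has_real_derivative f (t - y)) (at t within {a0..u})"
        by (simp add: has_field_derivative_at_within)
      then show "((\<lambda>t. P (t - y)) has_vector_derivative f (t - y)) (at t within {a0..u})"
        by (simp add: has_real_derivative_iff_has_vector_derivative)
    qed
    moreover have "(\<lambda>t. f (t - y)) = (\<lambda>t. Hx F t y)" unfolding f_def Hx_def by simp
    ultimately show "((\<lambda>t. Hx F t y) has_integral Phi y) {a0..u}" unfolding Phi_def by simp
  qed
qed

lemma deriv_lim_zero:
  assumes dg: "\<And>x. (g has_real_derivative G x) (at x)" and g: "AC_bar g" and G: "AC_bar G"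
  shows "(G \<longlongrightarrow> 0) at_top" "(G \<longlongrightarrow> 0) at_bot"
proof -
  obtain LG where LG: "(G \<longlongrightarrow> LG) at_top" using AC_bar_lim_top[OF G] by blast
  obtain Lg where Lg: "(g \<longlongrightarrow> Lg) at_top" using AC_bar_lim_top[OF g] by blast
  have "LG = 0"
  proof (rule ccontr)
    assume ne: "LG \<noteq> 0"
    define c where "c = \<bar>LG\<bar> / 2"
    have c: "c > 0" using ne unfolding c_def by simp
    have "eventually (\<lambda>x. dist (G x) LG < c) at_top" using LG c by (rule tendstoD)
    then obtain A1 where A1: "\<And>x. x \<ge> A1 \<Longrightarrow> \<bar>G x - LG\<bar> < c"
      unfolding eventually_at_top_linorder dist_real_def by blast
    have "eventually (\<lambda>x. dist (g x) Lg < c/2) at_top" using Lg c by (intro tendstoD) auto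
    then obtain A2 where A2: "\<And>x. x \<ge> A2 \<Longrightarrow> \<bar>g x - Lg\<bar> < c/2"
      unfolding eventually_at_top_linorder dist_real_def by blast
    define x where "x = max A1 A2"
    obtain z where z: "x < z" "z < x + 1" "g (x + 1) - g x = (x + 1 - x) * G z"
      using MVT2[of x "x + 1" g G] dg by force
    have "\<bar>G z - LG\<bar> < c" using A1[of z] z unfolding x_def by simp
    then have "\<bar>G z\<bar> > c" unfolding c_def by linarith
    moreover have "\<bar>g (x + 1) - g x\<bar> < c"
    proof -
      have "x \<ge> A2" "x + 1 \<ge> A2" unfolding x_def by auto
      then have "\<bar>g x - Lg\<bar> < c/2" "\<bar>g (x + 1) - Lg\<bar> < c/2" using A2 by blast+
      then show ?thesis by linarith
    qed
    ultimately show False using z(3) by simp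
  qed
  then show "(G \<longlongrightarrow> 0) at_top" using LG by simp
  obtain LG' where LG': "(G \<longlongrightarrow> LG') at_bot" using AC_bar_lim_bot[OF G] by blast
  obtain Lg' where Lg': "(g \<longlongrightarrow> Lg') at_bot" using AC_bar_lim_bot[OF g] by blast
  have "LG' = 0"
  proof (rule ccontr)
    assume ne: "LG' \<noteq> 0"
    define c where "c = \<bar>LG'\<bar> / 2"
    have c: "c > 0" using ne unfolding c_def by simp
    have "eventually (\<lambda>x. dist (G x) LG' < c) at_bot" using LG' c by (rule tendstoD)
    then obtain A1 where A1: "\<And>x. x \<le> A1 \<Longrightarrow> \<bar>G x - LG'\<bar> < c"
      unfolding eventually_at_bot_linorder dist_real_def by blast
    have "eventually (\<lambda>x. dist (g x) Lg' < c/2) at_bot" using Lg' c by (intro tendstoD) auto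
    then obtain A2 where A2: "\<And>x. x \<le> A2 \<Longrightarrow> \<bar>g x - Lg'\<bar> < c/2"
      unfolding eventually_at_bot_linorder dist_real_def by blast
    define x where "x = min A1 A2"
    obtain z where z: "x - 1 < z" "z < x" "g x - g (x - 1) = (x - (x - 1)) * G z"
      using MVT2[of "x - 1" x g G] dg by force
    have "\<bar>G z - LG'\<bar> < c" using A1[of z] z unfolding x_def by simp
    then have "\<bar>G z\<bar> > c" unfolding c_def by linarith
    moreover have "\<bar>g x - g (x - 1)\<bar> < c"
    proof -
      have "x \<le> A2" "x - 1 \<le> A2" unfolding x_def by auto
      then have "\<bar>g x - Lg'\<bar> < c/2" "\<bar>g (x - 1) - Lg'\<bar> < c/2" using A2 by blast+
      then show ?thesis by linarith
    qed
    ultimately show False using z(3) by simp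
  qed
  then show "(G \<longlongrightarrow> 0) at_bot" using LG' by simp
qed


lemma eq_by_eps:
  fixes x y :: real
  assumes "\<And>e. e > 0 \<Longrightarrow> \<bar>x - y\<bar> \<le> e"
  shows "x = y"
proof -
  have "\<bar>x - y\<bar> \<le> 0" by (rule field_le_epsilon) (use assms in simp)
  then show ?thesis by simp
qed

lemma tailp_mono: "tailp g e A \<Longrightarrow> A \<le> A' \<Longrightarrow> tailp g e A'"
  unfolding tailp_def
proof (elim conjE, intro conjI allI impI)
  assume A: "A > 0" "\<forall>D S. D division_of S \<and> (\<forall>K\<in>D. K \<subseteq> {..- A} \<or> K \<subseteq> {A..}) \<longrightarrow> (\<Sum>K\<in>D. \<bar>Dg g K\<bar>) \<le> e"
    and AA: "A \<le> A'"
  show "A' > 0" using A AA by simp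
  fix D S assume D: "D division_of S \<and> (\<forall>K\<in>D. K \<subseteq> {..- A'} \<or> K \<subseteq> {A'..})"
  then have "\<forall>K\<in>D. K \<subseteq> {..- A} \<or> K \<subseteq> {A..}" using AA by fastforce
  then show "(\<Sum>K\<in>D. \<bar>Dg g K\<bar>) \<le> e" using A(2) D by blast
qed

lemma AC_bar_cont_on: "AC_bar g \<Longrightarrow> continuous_on S g"
  by (intro continuous_at_imp_continuous_on ballI AC_bar_cont)

lemma Hx_cont_y:
  assumes "B_C F"
  shows "continuous_on S (Hx F x)"
proof -
  have c: "continuous_on UNIV F" using assms unfolding B_C_def by blast
  have "continuous_on S (\<lambda>y. F (x - y))"
    by (rule continuous_on_compose2[OF c]) (auto intro: continuous_intros)
  then show ?thesis unfolding Hx_def by (intro continuous_intros)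
qed

lemma key_identity:
  assumes F: "B_C F" and dg: "\<And>y. (g has_real_derivative G y) (at y)"
    and g: "AC_bar g" and G: "AC_bar G" and au: "a0 \<le> u"
  shows "integral {a0..u} (\<lambda>t. hs_integral_R (Hx F t) G) = hs_integral_R (Hx F u) g - hs_integral_R (Hx F a0) g"
proof (rule eq_by_eps)
  fix \<epsilon> :: real assume eps: "\<epsilon> > 0"
  obtain Mg where Mg: "BVM g Mg" by (rule AC_bar_BVM[OF g])
  obtain MG where MG: "BVM G MG" by (rule AC_bar_BVM[OF G])
  obtain BH where BH: "BH \<ge> 0" "\<And>x t. \<bar>Hx F x t\<bar> \<le> BH" by (rule Hx_bound[OF F]) blast
  define W where "W t = hs_integral_R (Hx F t) G" for t
  define Q where "Q x = hs_integral_R (Hx F x) g" for x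
  define K where "K = 6 * BH * (u - a0) + 8 * BH + 1"
  have K: "K \<ge> 1" using BH(1) au unfolding K_def by simp
  define \<epsilon>1 where "\<epsilon>1 = \<epsilon> / K"
  have e1: "\<epsilon>1 > 0" using eps K unfolding \<epsilon>1_def by simp
  obtain AG where TG: "tailp G \<epsilon>1 AG" by (rule AC_bar_tailp[OF G e1])
  obtain Ag where Tg: "tailp g \<epsilon>1 Ag" by (rule AC_bar_tailp[OF g e1])
  have "eventually (\<lambda>y. dist (G y) 0 < \<epsilon>1) at_top" using deriv_lim_zero(1)[OF dg g G] e1 by (rule tendstoD)
  then obtain AT where AT: "\<And>y. y \<ge> AT \<Longrightarrow> \<bar>G y\<bar> < \<epsilon>1"
    unfolding eventually_at_top_linorder dist_real_def by auto
  have "eventually (\<lambda>y. dist (G y) 0 < \<epsilon>1) at_bot" using deriv_lim_zero(2)[OF dg g G] e1 by (rule tendstoD)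
  then obtain AB where AB: "\<And>y. y \<le> AB \<Longrightarrow> \<bar>G y\<bar> < \<epsilon>1"
    unfolding eventually_at_bot_linorder dist_real_def by auto
  define A where "A = max (max AG Ag) (max AT (- AB)) + 1"
  have AG0: "AG > 0" using TG unfolding tailp_def by simp
  define a where "a = - A"
  define b where "b = A"
  have A0: "A > 0" using AG0 unfolding A_def by simp
  have ab: "a \<le> b" unfolding a_def b_def using A0 by simp
  have TG': "tailp G \<epsilon>1 A" by (rule tailp_mono[OF TG]) (simp add: A_def)
  have Tg': "tailp g \<epsilon>1 A" by (rule tailp_mono[OF Tg]) (simp add: A_def)
  have "b \<ge> AT" unfolding b_def A_def by simp
  then have Gb: "\<bar>G b\<bar> \<le> \<epsilon>1" using AT[of b] by simp
  have "a \<le> AB" unfolding a_def A_def by simp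
  then have Ga: "\<bar>G a\<bar> \<le> \<epsilon>1" using AB[of a] by simp
  have Gc: "continuous_on S G" for S by (rule AC_bar_cont_on[OF G])
  obtain Phi where Phi: "\<And>y. y \<in> {a..b} \<Longrightarrow> (Phi has_real_derivative (F (u - y) - F (a0 - y))) (at y)"
    "\<And>y. y \<in> {a..b} \<Longrightarrow> ((\<lambda>t. Hx F t y) has_integral Phi y) {a0..u}"
    by (rule PHI[OF F au ab]) blast
  have Fc: "continuous_on UNIV F" using F unfolding B_C_def by blast
  have phic: "continuous_on {a..b} (\<lambda>y. F (u - y) - F (a0 - y))"
    by (intro continuous_intros continuous_on_compose2[OF Fc]) auto
  have hFub: "hs_has_integral Phi G (integral {a0..u} (\<lambda>t. hs_integral (Hx F t) G a b)) {a..b}"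
    by (rule Fubini[OF F MG ab au Phi(2)])
  have hIBP: "hs_has_integral Phi G (Phi b * G b - Phi a * G a - integral {a..b} (\<lambda>y. G y * (F (u - y) - F (a0 - y)))) {a..b}"
    by (rule IBP[OF ab Phi(1) phic Gc])
  have E1: "integral {a0..u} (\<lambda>t. hs_integral (Hx F t) G a b) =
      Phi b * G b - Phi a * G a - integral {a..b} (\<lambda>y. G y * (F (u - y) - F (a0 - y)))"
    by (rule hs_unique[OF hFub hIBP])
  have RSRx: "hs_integral (Hx F x) g a b = integral {a..b} (\<lambda>y. Hx F x y * G y)" for x
    by (rule hs_integral_eq[OF RSR[OF ab dg Gc Hx_cont_y[OF F]]])
  have int_x: "(\<lambda>y. Hx F x y * G y) integrable_on {a..b}" for x
    by (intro integrable_continuous_real continuous_on_mult Hx_cont_y[OF F] Gc)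
  have "integral {a..b} (\<lambda>y. G y * (F (u - y) - F (a0 - y))) =
      integral {a..b} (\<lambda>y. Hx F a0 y * G y - Hx F u y * G y)"
    by (rule integral_cong) (simp add: Hx_def algebra_simps)
  also have "\<dots> = integral {a..b} (\<lambda>y. Hx F a0 y * G y) - integral {a..b} (\<lambda>y. Hx F u y * G y)"
    by (rule integral_diff[OF int_x int_x])
  finally have E2: "integral {a0..u} (\<lambda>t. hs_integral (Hx F t) G a b) =
      Phi b * G b - Phi a * G a - hs_integral (Hx F a0) g a b + hs_integral (Hx F u) g a b"
    unfolding E1 RSRx by simp
  have Pb: "\<bar>Phi y\<bar> \<le> BH * (u - a0)" if "y \<in> {a..b}" for y
  proof -
    have "norm (Phi y) \<le> BH * content (cbox a0 u)"
      by (rule has_integral_bound[OF BH(1)]) (use Phi(2)[OF that] BH(2) in \<open>auto simp: box_real\<close>)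
    then show ?thesis using au by simp
  qed
  have bnd1: "\<bar>Phi b * G b - Phi a * G a\<bar> \<le> 2 * (BH * (u - a0) * \<epsilon>1)"
  proof -
    have "\<bar>Phi b * G b\<bar> \<le> BH * (u - a0) * \<epsilon>1"
      unfolding abs_mult by (rule mult_mono) (use Pb[of b] ab Gb BH au in auto)
    moreover have "\<bar>Phi a * G a\<bar> \<le> BH * (u - a0) * \<epsilon>1"
      unfolding abs_mult by (rule mult_mono) (use Pb[of a] ab Ga BH au in auto)
    ultimately show ?thesis by linarith
  qed
  have aA: "a \<le> - A" "A \<le> b" unfolding a_def b_def by simp_all
  have bnd2: "\<bar>hs_integral (Hx F x) g a b - Q x\<bar> \<le> 4 * (BH * \<epsilon>1)" for x
    unfolding Q_def by (rule JR(2)[OF g Mg Hx_UCR[OF F] BH(2) Tg' aA])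
  have bnd3: "\<bar>hs_integral (Hx F t) G a b - W t\<bar> \<le> 4 * (BH * \<epsilon>1)" for t
    unfolding W_def by (rule JR(2)[OF G MG Hx_UCR[OF F] BH(2) TG' aA])
  have Wint: "(W has_integral integral {a0..u} W) {a0..u}"
    unfolding W_def by (intro integrable_integral integrable_continuous_real continuous_on_subset[OF JR_cont_t[OF F G]]) simp
  have Jint: "((\<lambda>t. hs_integral (Hx F t) G a b) has_integral integral {a0..u} (\<lambda>t. hs_integral (Hx F t) G a b)) {a0..u}"
    by (intro integrable_integral integrable_continuous_real continuous_on_subset[OF J_cont_t[OF F MG ab]]) simp
  have "((\<lambda>t. hs_integral (Hx F t) G a b - W t) has_integral
      (integral {a0..u} (\<lambda>t. hs_integral (Hx F t) G a b) - integral {a0..u} W)) {a0..u}"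
    by (rule has_integral_diff[OF Jint Wint])
  then have "norm (integral {a0..u} (\<lambda>t. hs_integral (Hx F t) G a b) - integral {a0..u} W) \<le>
      (4 * (BH * \<epsilon>1)) * content (cbox a0 u)"
    by (intro has_integral_bound[where f="\<lambda>t. hs_integral (Hx F t) G a b - W t"])
       (use bnd3 BH(1) e1 in \<open>auto simp: box_real\<close>)
  then have bnd4: "\<bar>integral {a0..u} (\<lambda>t. hs_integral (Hx F t) G a b) - integral {a0..u} W\<bar> \<le> 4 * (BH * \<epsilon>1) * (u - a0)"
    using au by simp
  have tot: "\<bar>integral {a0..u} W - (Q u - Q a0)\<bar> \<le>
      4 * (BH * \<epsilon>1) * (u - a0) + 2 * (BH * (u - a0) * \<epsilon>1) + 4 * (BH * \<epsilon>1) + 4 * (BH * \<epsilon>1)"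
    using bnd1 bnd2[of a0] bnd2[of u] bnd4 E2 by linarith
  have "4 * (BH * \<epsilon>1) * (u - a0) + 2 * (BH * (u - a0) * \<epsilon>1) + 4 * (BH * \<epsilon>1) + 4 * (BH * \<epsilon>1)
      = \<epsilon>1 * (K - 1)" unfolding K_def by (simp add: algebra_simps)
  also have "\<dots> \<le> \<epsilon>1 * K" using e1 by simp
  also have "\<epsilon>1 * K = \<epsilon>" unfolding \<epsilon>1_def using K by simp
  finally show "\<bar>integral {a0..u} (\<lambda>t. hs_integral_R (Hx F t) G) - (hs_integral_R (Hx F u) g - hs_integral_R (Hx F a0) g)\<bar> \<le> \<epsilon>"
    using tot unfolding W_def Q_def by simp
qed


lemma conv_deriv:
  assumes F: "B_C F" and dg: "\<And>y. (g has_real_derivative G y) (at y)"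
    and g: "AC_bar g" and G: "AC_bar G"
  shows "(conv F g has_real_derivative conv F G x) (at x)"
proof -
  define W where "W t = hs_integral_R (Hx F t) G" for t
  define c where "c = x - 1"
  have Wc: "continuous_on {c..x + 1} W"
    unfolding W_def by (rule continuous_on_subset[OF JR_cont_t[OF F G]]) simp
  have "((\<lambda>y. integral {c..y} W) has_real_derivative W x) (at x within {c..x + 1})"
    by (rule integral_has_real_derivative[OF Wc]) (simp add: c_def)
  then have d1: "((\<lambda>y. integral {c..y} W) has_real_derivative W x) (at x)"
    using at_within_Icc_at[of c x "x + 1"] by (simp add: c_def)
  have d2: "((\<lambda>y. lim_top F * lim_top g - hs_integral_R (Hx F c) g - integral {c..y} W) has_real_derivative (- W x)) (at x)"
    using DERIV_diff[OF DERIV_const d1] by simp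
  have LG: "lim_top G = 0" by (rule lim_top_eq[OF deriv_lim_zero(1)[OF dg g G]])
  have eqW: "- W x = conv F G x" unfolding conv_Hx W_def LG by simp
  show ?thesis
  proof (rule has_field_derivative_transform_within_open[OF d2[unfolded eqW], of "{c<..}"])
    show "open {c<..}" by simp
    show "x \<in> {c<..}" by (simp add: c_def)
    fix y assume "y \<in> {c<..}"
    then have "c \<le> y" by simp
    then have "integral {c..y} W = hs_integral_R (Hx F y) g - hs_integral_R (Hx F c) g"
      unfolding W_def by (rule key_identity[OF F dg g G])
    then show "lim_top F * lim_top g - hs_integral_R (Hx F c) g - integral {c..y} W = conv F g y"
      unfolding conv_Hx by simp
  qed
qed

lemma main_induct:
  assumes F: "B_C F"
  shows "(\<forall>k<n. \<forall>x. (deriv ^^ k) g differentiable (at x)) \<Longrightarrow> (\<forall>k\<le>n. AC_bar ((deriv ^^ k) g)) \<Longrightarrow>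
       (\<forall>k<n. \<forall>x. (deriv ^^ k) (conv F g) differentiable (at x))
       \<and> continuous_on UNIV ((deriv ^^ n) (conv F g))
       \<and> (\<forall>x. (deriv ^^ n) (conv F g) x = conv F ((deriv ^^ n) g) x)"
proof (induction n arbitrary: g)
  case 0
  then have "AC_bar g" by auto
  then show ?case using conv_cont[OF F] by simp
next
  case (Suc n)
  have gd: "g differentiable (at x)" for x using Suc.prems(1) by (metis funpow_0 zero_less_Suc)
  define G where "G = deriv g"
  have dg: "(g has_real_derivative G y) (at y)" for y
    unfolding G_def using gd DERIV_deriv_iff_real_differentiable by blast
  have g: "AC_bar g" using Suc.prems(2) by (metis funpow_0 zero_le)
  have shift: "(deriv ^^ k) G = (deriv ^^ Suc k) g" for k
    unfolding G_def by (simp add: funpow_Suc_right del: funpow.simps)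
  have G: "AC_bar G" using Suc.prems(2) shift[of 0] by (metis Suc_le_mono funpow_0 zero_le)
  have dconv: "(conv F g has_real_derivative conv F G x) (at x)" for x by (rule conv_deriv[OF F dg g G])
  have dc: "deriv (conv F g) = conv F G" using dconv DERIV_imp_deriv by blast
  have shiftc: "(deriv ^^ k) (conv F G) = (deriv ^^ Suc k) (conv F g)" for k
    using dc by (simp add: funpow_Suc_right del: funpow.simps)
  have h1: "\<forall>k<n. \<forall>x. (deriv ^^ k) G differentiable (at x)"
  proof (intro allI impI)
    fix k x assume "k < n"
    then have "Suc k < Suc n" by simp
    then have "(deriv ^^ Suc k) g differentiable (at x)" using Suc.prems(1) by blast
    then show "(deriv ^^ k) G differentiable (at x)" unfolding shift .
  qed
  have h2: "\<forall>k\<le>n. AC_bar ((deriv ^^ k) G)"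
  proof (intro allI impI)
    fix k assume "k \<le> n"
    then have "Suc k \<le> Suc n" by simp
    then have "AC_bar ((deriv ^^ Suc k) g)" using Suc.prems(2) by blast
    then show "AC_bar ((deriv ^^ k) G)" unfolding shift .
  qed
  note IH = Suc.IH[OF h1 h2, unfolded shiftc shift]
  have "\<forall>k<Suc n. \<forall>x. (deriv ^^ k) (conv F g) differentiable (at x)"
  proof (intro allI impI)
    fix k x assume k: "k < Suc n"
    show "(deriv ^^ k) (conv F g) differentiable (at x)"
    proof (cases k)
      case 0
      then show ?thesis using dconv real_differentiable_def by auto
    next
      case (Suc k')
      then have "k' < n" using k by simp
      then show ?thesis using IH Suc by blast
    qed
  qed
  then show ?case using IH by blast
qed

theorem theorem4:
  fixes F g :: "real \<Rightarrow> real" and n :: nat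
  assumes "B_C F"
    and "\<forall>k<n. \<forall>x. (deriv ^^ k) g differentiable (at x)"
    and "\<forall>k\<le>n. AC_bar ((deriv ^^ k) g)"
  shows "(\<forall>k<n. \<forall>x. (deriv ^^ k) (conv F g) differentiable (at x))
       \<and> continuous_on UNIV ((deriv ^^ n) (conv F g))
       \<and> (\<forall>x. (deriv ^^ n) (conv F g) x = conv F ((deriv ^^ n) g) x)"
  by (rule main_induct[OF assms(1) assms(2) assms(3)])


end
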